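(* Let $f:A\to B$ be a ring homomorphism, $\mathfrak b$ an ideal of $B$, and $A\bowtie^f\mathfrak b:=\{(a,f(a)+b): a\in A,\ b\in\mathfrak b\}\subseteq A\times B$. For a maximal ideal $\mathfrak m$ of $A$ let $S_{\mathfrak m}:=f(A\setminus\mathfrak m)+\mathfrak b$, $\mathfrak b_{S_{\mathfrak m}}:=\mathfrak bB_{S_{\mathfrak m}}$, and $f_{\mathfrak m}:A_{\mathfrak m}\to B_{S_{\mathfrak m}}$ the ring homomorphism induced by $f$. Assume that for every maximal ideal $\mathfrak m$ of $A$ containing $f^{-1}(\mathfrak b)$, either $f_{\mathfrak m}$ is surjective or $f^{-1}(\mathfrak b)A_{\mathfrak m}\neq\{0\}$. Then the following are equivalent: (i) $A\bowtie^f\mathfrak b$ has weak global dimension at most 1; (ii) $A$ has weak global dimension at most 1, $B_{\mathfrak n}$ is a valuation domain for every maximal ideal $\mathfrak n$ of $B$ not containing $\mathfrak b$, and $\mathfrak b_{S_{\mathfrak m}}=\{0\}$ for every maximal ideal $\mathfrak m$ of $A$ containing $f^{-1}(\mathfrak b)$.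
   Context: All rings are commutative with identity. A ring $R$ has weak global dimension at most 1 if $R_{\mathfrak p}$ is a valuation domain for every prime (equivalently every maximal) ideal $\mathfrak p$ of $R$. $B_{S_{\mathfrak m}}$ denotes the localization of $B$ at the multiplicative set $S_{\mathfrak m}$ (possibly zero). *)

theory Defs
  imports "HOL-Algebra.Algebra"
begin

text \<open>Standard construction: pairs (r,s) with r in R, s in S, where
  (r,s) ~ (r',s') iff t(rs' - r's) = 0 for some t in S.  If 0 is in S the
  result is the zero ring.\<close>

definition loc_rel :: "('a, 'm) ring_scheme \<Rightarrow> 'a set \<Rightarrow> (('a \<times> 'a) \<times> ('a \<times> 'a)) set" where
  "loc_rel R S = {((r, s), (r', s')). r \<in> carrier R \<and> s \<in> S \<and> r' \<in> carrier R \<and> s' \<in> S \<and>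
      (\<exists>t\<in>S. t \<otimes>\<^bsub>R\<^esub> ((r \<otimes>\<^bsub>R\<^esub> s') \<ominus>\<^bsub>R\<^esub> (r' \<otimes>\<^bsub>R\<^esub> s)) = \<zero>\<^bsub>R\<^esub>)}"

definition loc_class :: "('a, 'm) ring_scheme \<Rightarrow> 'a set \<Rightarrow> 'a \<times> 'a \<Rightarrow> ('a \<times> 'a) set" where
  "loc_class R S p = loc_rel R S `` {p}"

definition loc_rep :: "('a \<times> 'a) set \<Rightarrow> 'a \<times> 'a" where
  "loc_rep U = (SOME p. p \<in> U)"

definition loc :: "('a, 'm) ring_scheme \<Rightarrow> 'a set \<Rightarrow> ('a \<times> 'a) set ring" where
  "loc R S = \<lparr> carrier = (carrier R \<times> S) // loc_rel R S,
     monoid.mult = (\<lambda>U V. case loc_rep U of (r, s) \<Rightarrow> case loc_rep V of (r', s') \<Rightarrow>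
                        loc_class R S (r \<otimes>\<^bsub>R\<^esub> r', s \<otimes>\<^bsub>R\<^esub> s')),
     monoid.one = loc_class R S (\<one>\<^bsub>R\<^esub>, \<one>\<^bsub>R\<^esub>),
     ring.zero = loc_class R S (\<zero>\<^bsub>R\<^esub>, \<one>\<^bsub>R\<^esub>),
     ring.add = (\<lambda>U V. case loc_rep U of (r, s) \<Rightarrow> case loc_rep V of (r', s') \<Rightarrow>
                        loc_class R S ((r \<otimes>\<^bsub>R\<^esub> s') \<oplus>\<^bsub>R\<^esub> (r' \<otimes>\<^bsub>R\<^esub> s), s \<otimes>\<^bsub>R\<^esub> s')) \<rparr>"

definition loc_can :: "('a, 'm) ring_scheme \<Rightarrow> 'a set \<Rightarrow> 'a \<Rightarrow> ('a \<times> 'a) set" where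
  "loc_can R S r = loc_class R S (r, \<one>\<^bsub>R\<^esub>)"

definition loc_ext :: "('a, 'm) ring_scheme \<Rightarrow> 'a set \<Rightarrow> 'a set \<Rightarrow> ('a \<times> 'a) set set" where
  "loc_ext R S I = Idl\<^bsub>loc R S\<^esub> (loc_can R S ` I)"

definition loc_induced ::
  "('a \<Rightarrow> 'b) \<Rightarrow> ('b, 'n) ring_scheme \<Rightarrow> 'b set \<Rightarrow> ('a \<times> 'a) set \<Rightarrow> ('b \<times> 'b) set" where
  "loc_induced f B T U = (case loc_rep U of (a, s) \<Rightarrow> loc_class B T (f a, f s))"

definition valuation_domain :: "('a, 'm) ring_scheme \<Rightarrow> bool" where
  "valuation_domain R \<longleftrightarrow> domain R \<and>
     (\<forall>x\<in>carrier R. \<forall>y\<in>carrier R. x divides\<^bsub>R\<^esub> y \<or> y divides\<^bsub>R\<^esub> x)"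

definition wgldim_le1 :: "('a, 'm) ring_scheme \<Rightarrow> bool" where
  "wgldim_le1 R \<longleftrightarrow> (\<forall>P. primeideal P R \<longrightarrow> valuation_domain (loc R (carrier R - P)))"

definition amalg :: "('a, 'm) ring_scheme \<Rightarrow> ('b, 'n) ring_scheme \<Rightarrow> ('a \<Rightarrow> 'b) \<Rightarrow> 'b set
    \<Rightarrow> ('a \<times> 'b) ring" where
  "amalg A B f J = (RDirProd A B)
     \<lparr> carrier := {(a, f a \<oplus>\<^bsub>B\<^esub> j) | a j. a \<in> carrier A \<and> j \<in> J} \<rparr>"

definition S_set :: "('a, 'm) ring_scheme \<Rightarrow> ('b, 'n) ring_scheme \<Rightarrow> ('a \<Rightarrow> 'b) \<Rightarrow> 'b set
    \<Rightarrow> 'a set \<Rightarrow> 'b set" where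
  "S_set A B f J M = {f s \<oplus>\<^bsub>B\<^esub> j | s j. s \<in> carrier A - M \<and> j \<in> J}"

end

theory Submission
  imports Defs
begin
lemma (in cring) times_diff_zero_iff:
  assumes "a \<in> carrier R" "b \<in> carrier R" "t \<in> carrier R"
  shows "t \<otimes> (a \<ominus> b) = \<zero> \<longleftrightarrow> t \<otimes> a = t \<otimes> b"
proof -
  have "t \<otimes> (a \<ominus> b) = t \<otimes> a \<ominus> t \<otimes> b"
    using assms by (simp add: minus_eq r_distr r_minus)
  moreover have "\<And>x y. x \<in> carrier R \<Longrightarrow> y \<in> carrier R \<Longrightarrow> x \<ominus> y = \<zero> \<longleftrightarrow> x = y"
    by (metis a_minus_def add.inv_closed add.inv_equality minus_minus r_neg)
  ultimately show ?thesis using assms by simp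
qed

locale mset = cring R for R (structure) + fixes S
  assumes S_sub: "S \<subseteq> carrier R" and one_S: "\<one> \<in> S"
    and S_mult: "\<lbrakk>s \<in> S; t \<in> S\<rbrakk> \<Longrightarrow> s \<otimes> t \<in> S"
begin

lemma S_carr: "s \<in> S \<Longrightarrow> s \<in> carrier R" using S_sub by auto

lemma rel_iff: "((r, s), (r', s')) \<in> loc_rel R S \<longleftrightarrow>
  r \<in> carrier R \<and> s \<in> S \<and> r' \<in> carrier R \<and> s' \<in> S \<and> (\<exists>t\<in>S. t \<otimes> (r \<otimes> s') = t \<otimes> (r' \<otimes> s))"
  unfolding loc_rel_def using times_diff_zero_iff S_carr by auto

lemma relI: "\<lbrakk>r \<in> carrier R; s \<in> S; r' \<in> carrier R; s' \<in> S; t \<in> S; t \<otimes> (r \<otimes> s') = t \<otimes> (r' \<otimes> s)\<rbrakk>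
   \<Longrightarrow> ((r, s), (r', s')) \<in> loc_rel R S"
  using rel_iff by blast

lemma relI1: "\<lbrakk>r \<in> carrier R; s \<in> S; r' \<in> carrier R; s' \<in> S; r \<otimes> s' = r' \<otimes> s\<rbrakk>
   \<Longrightarrow> ((r, s), (r', s')) \<in> loc_rel R S"
  using relI[of r s r' s' \<one>] one_S S_carr by simp

lemma equiv_rel: "equiv (carrier R \<times> S) (loc_rel R S)"
proof (rule equivI)
  show "loc_rel R S \<subseteq> (carrier R \<times> S) \<times> (carrier R \<times> S)"
    unfolding loc_rel_def by auto
  show "refl_on (carrier R \<times> S) (loc_rel R S)"
    unfolding refl_on_def
  proof (intro ballI)
    fix x assume "x \<in> carrier R \<times> S" then show "(x, x) \<in> loc_rel R S"
      by (auto intro!: relI1 simp: S_carr)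
  qed
  show "sym (loc_rel R S)"
    unfolding sym_def by (auto simp: rel_iff) (metis)
  show "trans (loc_rel R S)"
  proof (rule transI)
    fix x y z assume xy: "(x, y) \<in> loc_rel R S" and yz: "(y, z) \<in> loc_rel R S"
    obtain r s where x: "x = (r, s)" by fastforce
    obtain r' s' where y: "y = (r', s')" by fastforce
    obtain r'' s'' where z: "z = (r'', s'')" by fastforce
    from xy obtain t1 where h1: "r \<in> carrier R" "s \<in> S" "r' \<in> carrier R" "s' \<in> S" "t1 \<in> S"
       "t1 \<otimes> (r \<otimes> s') = t1 \<otimes> (r' \<otimes> s)" unfolding x y rel_iff by blast
    from yz obtain t2 where h2: "r'' \<in> carrier R" "s'' \<in> S" "t2 \<in> S"
       "t2 \<otimes> (r' \<otimes> s'') = t2 \<otimes> (r'' \<otimes> s')" unfolding z y rel_iff by blast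
    have c: "r \<in> carrier R" "s \<in> carrier R" "r' \<in> carrier R" "s' \<in> carrier R" "r'' \<in> carrier R"
      "s'' \<in> carrier R" "t1 \<in> carrier R" "t2 \<in> carrier R" using h1 h2 S_carr by auto
    have "(t1 \<otimes> t2 \<otimes> s') \<otimes> (r \<otimes> s'') = (t2 \<otimes> s'') \<otimes> (t1 \<otimes> (r \<otimes> s'))"
      using c by (simp add: m_ac)
    also have "\<dots> = (t2 \<otimes> s'') \<otimes> (t1 \<otimes> (r' \<otimes> s))" using h1 by simp
    also have "\<dots> = (t1 \<otimes> s) \<otimes> (t2 \<otimes> (r' \<otimes> s''))" using c by (simp add: m_ac)
    also have "\<dots> = (t1 \<otimes> s) \<otimes> (t2 \<otimes> (r'' \<otimes> s'))" using h2 by simp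
    also have "\<dots> = (t1 \<otimes> t2 \<otimes> s') \<otimes> (r'' \<otimes> s)" using c by (simp add: m_ac)
    finally show "(x, z) \<in> loc_rel R S" unfolding x z
      using h1 h2 S_mult by (intro relI) auto
  qed
qed


abbreviation cls where "cls p \<equiv> loc_class R S p"

lemma carrier_loc: "carrier (loc R S) = (carrier R \<times> S) // loc_rel R S"
  by (simp add: loc_def)

lemma cls_carrier: "r \<in> carrier R \<Longrightarrow> s \<in> S \<Longrightarrow> cls (r, s) \<in> carrier (loc R S)"
  unfolding carrier_loc loc_class_def by (rule quotientI) auto

lemma cls_eq_iff: "r \<in> carrier R \<Longrightarrow> s \<in> S \<Longrightarrow> r' \<in> carrier R \<Longrightarrow> s' \<in> S \<Longrightarrow>
   cls (r, s) = cls (r', s') \<longleftrightarrow> ((r, s), (r', s')) \<in> loc_rel R S"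
  unfolding loc_class_def using eq_equiv_class_iff[OF equiv_rel] by auto

lemma cls_eqI: "r \<in> carrier R \<Longrightarrow> s \<in> S \<Longrightarrow> r' \<in> carrier R \<Longrightarrow> s' \<in> S \<Longrightarrow>
   r \<otimes> s' = r' \<otimes> s \<Longrightarrow> cls (r, s) = cls (r', s')"
  using cls_eq_iff relI1 by blast

lemma carrier_locE:
  assumes "U \<in> carrier (loc R S)"
  obtains r s where "r \<in> carrier R" "s \<in> S" "U = cls (r, s)"
  using assms unfolding carrier_loc loc_class_def by (auto elim!: quotientE)

lemma rep_cls: assumes "r \<in> carrier R" "s \<in> S"
  shows "loc_rep (cls (r, s)) \<in> carrier R \<times> S \<and> (loc_rep (cls (r, s)), (r, s)) \<in> loc_rel R S"
proof -
  have "(r, s) \<in> cls (r, s)" unfolding loc_class_def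
    using equiv_class_self[OF equiv_rel] assms by auto
  then have "loc_rep (cls (r, s)) \<in> cls (r, s)" unfolding loc_rep_def by (rule someI)
  then have rel: "((r, s), loc_rep (cls (r, s))) \<in> loc_rel R S" unfolding loc_class_def by auto
  then have "(loc_rep (cls (r, s)), (r, s)) \<in> loc_rel R S"
    using equiv_rel by (meson equivE symD)
  moreover have "loc_rep (cls (r, s)) \<in> carrier R \<times> S"
    using rel unfolding loc_rel_def by auto
  ultimately show ?thesis by blast
qed

lemma rep_clsE: assumes "r \<in> carrier R" "s \<in> S"
  obtains a b t where "loc_rep (cls (r, s)) = (a, b)" "a \<in> carrier R" "b \<in> S" "t \<in> S"
    "t \<otimes> (a \<otimes> s) = t \<otimes> (r \<otimes> b)"
  using rep_cls[OF assms] by (cases "loc_rep (cls (r, s))") (auto simp: rel_iff)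

lemma mult_cls: assumes "r \<in> carrier R" "s \<in> S" "r' \<in> carrier R" "s' \<in> S"
  shows "cls (r, s) \<otimes>\<^bsub>loc R S\<^esub> cls (r', s') = cls (r \<otimes> r', s \<otimes> s')"
proof -
  obtain a b t1 where a: "loc_rep (cls (r, s)) = (a, b)" "a \<in> carrier R" "b \<in> S" "t1 \<in> S"
    "t1 \<otimes> (a \<otimes> s) = t1 \<otimes> (r \<otimes> b)" using rep_clsE[OF assms(1,2)] by blast
  obtain a' b' t2 where a': "loc_rep (cls (r', s')) = (a', b')" "a' \<in> carrier R" "b' \<in> S" "t2 \<in> S"
    "t2 \<otimes> (a' \<otimes> s') = t2 \<otimes> (r' \<otimes> b')" using rep_clsE[OF assms(3,4)] by blast
  have c: "a \<in> carrier R" "b \<in> carrier R" "a' \<in> carrier R" "b' \<in> carrier R" "t1 \<in> carrier R" "t2 \<in> carrier R"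
    "r \<in> carrier R" "s \<in> carrier R" "r' \<in> carrier R" "s' \<in> carrier R"
    using a a' assms S_carr by auto
  have "(t1 \<otimes> t2) \<otimes> ((a \<otimes> a') \<otimes> (s \<otimes> s')) = (t1 \<otimes> (a \<otimes> s)) \<otimes> (t2 \<otimes> (a' \<otimes> s'))"
    using c by (simp add: m_ac)
  also have "\<dots> = (t1 \<otimes> (r \<otimes> b)) \<otimes> (t2 \<otimes> (r' \<otimes> b'))" using a a' by simp
  also have "\<dots> = (t1 \<otimes> t2) \<otimes> ((r \<otimes> r') \<otimes> (b \<otimes> b'))" using c by (simp add: m_ac)
  finally have "((a \<otimes> a', b \<otimes> b'), (r \<otimes> r', s \<otimes> s')) \<in> loc_rel R S"
    using a a' assms c S_mult by (intro relI[where t="t1 \<otimes> t2"]) auto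
  then have "cls (a \<otimes> a', b \<otimes> b') = cls (r \<otimes> r', s \<otimes> s')"
    using a a' assms c S_mult by (subst cls_eq_iff) auto
  then show ?thesis using a a' by (simp add: loc_def)
qed

lemma add_cls: assumes "r \<in> carrier R" "s \<in> S" "r' \<in> carrier R" "s' \<in> S"
  shows "cls (r, s) \<oplus>\<^bsub>loc R S\<^esub> cls (r', s') = cls (r \<otimes> s' \<oplus> r' \<otimes> s, s \<otimes> s')"
proof -
  obtain a b t1 where a: "loc_rep (cls (r, s)) = (a, b)" "a \<in> carrier R" "b \<in> S" "t1 \<in> S"
    "t1 \<otimes> (a \<otimes> s) = t1 \<otimes> (r \<otimes> b)" using rep_clsE[OF assms(1,2)] by blast
  obtain a' b' t2 where a': "loc_rep (cls (r', s')) = (a', b')" "a' \<in> carrier R" "b' \<in> S" "t2 \<in> S"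
    "t2 \<otimes> (a' \<otimes> s') = t2 \<otimes> (r' \<otimes> b')" using rep_clsE[OF assms(3,4)] by blast
  have c: "a \<in> carrier R" "b \<in> carrier R" "a' \<in> carrier R" "b' \<in> carrier R" "t1 \<in> carrier R" "t2 \<in> carrier R"
    "r \<in> carrier R" "s \<in> carrier R" "r' \<in> carrier R" "s' \<in> carrier R"
    using a a' assms S_carr by auto
  have "(t1 \<otimes> t2) \<otimes> ((a \<otimes> b' \<oplus> a' \<otimes> b) \<otimes> (s \<otimes> s'))
      = (t2 \<otimes> b' \<otimes> s') \<otimes> (t1 \<otimes> (a \<otimes> s)) \<oplus> (t1 \<otimes> b \<otimes> s) \<otimes> (t2 \<otimes> (a' \<otimes> s'))"
    using c by (simp add: m_ac l_distr r_distr)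
  also have "\<dots> = (t2 \<otimes> b' \<otimes> s') \<otimes> (t1 \<otimes> (r \<otimes> b)) \<oplus> (t1 \<otimes> b \<otimes> s) \<otimes> (t2 \<otimes> (r' \<otimes> b'))"
    using a a' by simp
  also have "\<dots> = (t1 \<otimes> t2) \<otimes> ((r \<otimes> s' \<oplus> r' \<otimes> s) \<otimes> (b \<otimes> b'))"
    using c by (simp add: m_ac l_distr r_distr a_ac)
  finally have "((a \<otimes> b' \<oplus> a' \<otimes> b, b \<otimes> b'), (r \<otimes> s' \<oplus> r' \<otimes> s, s \<otimes> s')) \<in> loc_rel R S"
    using a a' assms c S_mult by (intro relI[where t="t1 \<otimes> t2"]) auto
  then have "cls (a \<otimes> b' \<oplus> a' \<otimes> b, b \<otimes> b') = cls (r \<otimes> s' \<oplus> r' \<otimes> s, s \<otimes> s')"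
    using a a' assms c S_mult by (subst cls_eq_iff) auto
  then show ?thesis using a a' by (simp add: loc_def)
qed

lemma zero_loc: "\<zero>\<^bsub>loc R S\<^esub> = cls (\<zero>, \<one>)" by (simp add: loc_def)
lemma one_loc: "\<one>\<^bsub>loc R S\<^esub> = cls (\<one>, \<one>)" by (simp add: loc_def)


lemmas Sc = S_carr S_mult one_S

lemma loc_add_closed: "x \<in> carrier (loc R S) \<Longrightarrow> y \<in> carrier (loc R S) \<Longrightarrow> x \<oplus>\<^bsub>loc R S\<^esub> y \<in> carrier (loc R S)"
  by (elim carrier_locE) (auto simp: add_cls Sc intro!: cls_carrier)

lemma loc_mult_closed: "x \<in> carrier (loc R S) \<Longrightarrow> y \<in> carrier (loc R S) \<Longrightarrow> x \<otimes>\<^bsub>loc R S\<^esub> y \<in> carrier (loc R S)"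
  by (elim carrier_locE) (auto simp: mult_cls Sc intro!: cls_carrier)

lemma loc_cring: "cring (loc R S)"
proof (rule cringI)
  show "abelian_group (loc R S)"
  proof (rule abelian_groupI)
    show "\<zero>\<^bsub>loc R S\<^esub> \<in> carrier (loc R S)" by (simp add: zero_loc cls_carrier Sc)
  next
    fix x y z assume "x \<in> carrier (loc R S)" "y \<in> carrier (loc R S)" "z \<in> carrier (loc R S)"
    then show "x \<oplus>\<^bsub>loc R S\<^esub> y \<oplus>\<^bsub>loc R S\<^esub> z = x \<oplus>\<^bsub>loc R S\<^esub> (y \<oplus>\<^bsub>loc R S\<^esub> z)"
      by (elim carrier_locE) (simp add: add_cls Sc m_ac a_ac l_distr r_distr)
  next
    fix x y assume "x \<in> carrier (loc R S)" "y \<in> carrier (loc R S)"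
    then show "x \<oplus>\<^bsub>loc R S\<^esub> y = y \<oplus>\<^bsub>loc R S\<^esub> x"
      by (elim carrier_locE) (simp add: add_cls Sc m_ac a_ac)
  next
    fix x assume "x \<in> carrier (loc R S)"
    then show "\<zero>\<^bsub>loc R S\<^esub> \<oplus>\<^bsub>loc R S\<^esub> x = x"
      by (elim carrier_locE) (simp add: zero_loc add_cls Sc)
  next
    fix x assume "x \<in> carrier (loc R S)"
    then obtain r s where rs: "r \<in> carrier R" "s \<in> S" "x = cls (r, s)" by (elim carrier_locE)
    have "cls (\<ominus> r, s) \<oplus>\<^bsub>loc R S\<^esub> x = \<zero>\<^bsub>loc R S\<^esub>"
      using rs by (simp add: zero_loc add_cls Sc, intro cls_eqI) (simp_all add: Sc l_minus l_neg)
    then show "\<exists>y\<in>carrier (loc R S). y \<oplus>\<^bsub>loc R S\<^esub> x = \<zero>\<^bsub>loc R S\<^esub>"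
      using rs by (intro bexI[of _ "cls (\<ominus> r, s)"]) (auto intro!: cls_carrier)
  qed (rule loc_add_closed)
next
  show "comm_monoid (loc R S)"
  proof (rule comm_monoidI)
    show "\<one>\<^bsub>loc R S\<^esub> \<in> carrier (loc R S)" by (simp add: one_loc cls_carrier Sc)
  next
    fix x y z assume "x \<in> carrier (loc R S)" "y \<in> carrier (loc R S)" "z \<in> carrier (loc R S)"
    then show "x \<otimes>\<^bsub>loc R S\<^esub> y \<otimes>\<^bsub>loc R S\<^esub> z = x \<otimes>\<^bsub>loc R S\<^esub> (y \<otimes>\<^bsub>loc R S\<^esub> z)"
      by (elim carrier_locE) (simp add: mult_cls Sc m_ac)
  next
    fix x y assume "x \<in> carrier (loc R S)" "y \<in> carrier (loc R S)"
    then show "x \<otimes>\<^bsub>loc R S\<^esub> y = y \<otimes>\<^bsub>loc R S\<^esub> x"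
      by (elim carrier_locE) (simp add: mult_cls Sc m_ac)
  next
    fix x assume "x \<in> carrier (loc R S)"
    then show "\<one>\<^bsub>loc R S\<^esub> \<otimes>\<^bsub>loc R S\<^esub> x = x"
      by (elim carrier_locE) (simp add: one_loc mult_cls Sc)
  qed (rule loc_mult_closed)
next
  fix x y z assume "x \<in> carrier (loc R S)" "y \<in> carrier (loc R S)" "z \<in> carrier (loc R S)"
  then obtain r s r' s' r'' s'' where rs: "r \<in> carrier R" "s \<in> S" "x = cls (r, s)"
    "r' \<in> carrier R" "s' \<in> S" "y = cls (r', s')" "r'' \<in> carrier R" "s'' \<in> S" "z = cls (r'', s'')"
    by (elim carrier_locE) metis
  show "(x \<oplus>\<^bsub>loc R S\<^esub> y) \<otimes>\<^bsub>loc R S\<^esub> z = x \<otimes>\<^bsub>loc R S\<^esub> z \<oplus>\<^bsub>loc R S\<^esub> y \<otimes>\<^bsub>loc R S\<^esub> z"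
    using rs by (simp add: mult_cls add_cls Sc, intro cls_eqI) (simp_all add: Sc m_ac a_ac l_distr r_distr)
qed


lemma cls_zero_iff: "r \<in> carrier R \<Longrightarrow> s \<in> S \<Longrightarrow> cls (r, s) = \<zero>\<^bsub>loc R S\<^esub> \<longleftrightarrow> (\<exists>t\<in>S. t \<otimes> r = \<zero>)"
  unfolding zero_loc by (subst cls_eq_iff) (auto simp: rel_iff Sc)

lemma loc_one_zero_iff: "\<one>\<^bsub>loc R S\<^esub> = \<zero>\<^bsub>loc R S\<^esub> \<longleftrightarrow> \<zero> \<in> S"
  unfolding one_loc using cls_zero_iff[of \<one> \<one>] by (simp add: Sc)

lemma cls_divides_iff:
  assumes "r \<in> carrier R" "s \<in> S" "r' \<in> carrier R" "s' \<in> S"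
  shows "cls (r, s) divides\<^bsub>loc R S\<^esub> cls (r', s') \<longleftrightarrow> (\<exists>c\<in>carrier R. \<exists>u\<in>S. u \<otimes> r' = r \<otimes> c)"
proof
  assume "cls (r, s) divides\<^bsub>loc R S\<^esub> cls (r', s')"
  then obtain V where V: "V \<in> carrier (loc R S)" "cls (r', s') = cls (r, s) \<otimes>\<^bsub>loc R S\<^esub> V"
    unfolding factor_def by blast
  then obtain c0 u0 where cu: "c0 \<in> carrier R" "u0 \<in> S" "V = cls (c0, u0)" by (elim carrier_locE)
  have "cls (r', s') = cls (r \<otimes> c0, s \<otimes> u0)" using V cu assms by (simp add: mult_cls)
  then obtain t where t: "t \<in> S" "t \<otimes> (r' \<otimes> (s \<otimes> u0)) = t \<otimes> (r \<otimes> c0 \<otimes> s')"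
    using assms cu by (subst (asm) cls_eq_iff) (auto simp: rel_iff Sc)
  have "(t \<otimes> s \<otimes> u0) \<otimes> r' = r \<otimes> (t \<otimes> c0 \<otimes> s')"
    using t assms cu Sc by (simp add: m_ac)
  then show "\<exists>c\<in>carrier R. \<exists>u\<in>S. u \<otimes> r' = r \<otimes> c"
    using t assms cu Sc by (intro bexI[of _ "t \<otimes> c0 \<otimes> s'"] bexI[of _ "t \<otimes> s \<otimes> u0"]) auto
next
  assume "\<exists>c\<in>carrier R. \<exists>u\<in>S. u \<otimes> r' = r \<otimes> c"
  then obtain c u where cu: "c \<in> carrier R" "u \<in> S" "u \<otimes> r' = r \<otimes> c" by blast
  have "cls (r, s) \<otimes>\<^bsub>loc R S\<^esub> cls (c \<otimes> s, u \<otimes> s') = cls (r', s')"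
  proof -
    have "r \<otimes> (c \<otimes> s) \<otimes> s' = r' \<otimes> (s \<otimes> (u \<otimes> s'))"
    proof -
      have "r \<otimes> (c \<otimes> s) \<otimes> s' = (r \<otimes> c) \<otimes> (s \<otimes> s')" using assms cu(1,2) Sc by (simp add: m_ac)
      also have "\<dots> = (u \<otimes> r') \<otimes> (s \<otimes> s')" using cu by simp
      also have "\<dots> = r' \<otimes> (s \<otimes> (u \<otimes> s'))" using assms cu(1,2) Sc by (simp add: m_ac)
      finally show ?thesis .
    qed
    moreover have "cls (r, s) \<otimes>\<^bsub>loc R S\<^esub> cls (c \<otimes> s, u \<otimes> s') = cls (r \<otimes> (c \<otimes> s), s \<otimes> (u \<otimes> s'))"
      using assms cu Sc by (intro mult_cls) auto
    ultimately show ?thesis using assms cu Sc by (metis cls_eqI m_closed)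
  qed
  then show "cls (r, s) divides\<^bsub>loc R S\<^esub> cls (r', s')"
    unfolding factor_def using assms cu Sc by (intro bexI[of _ "cls (c \<otimes> s, u \<otimes> s')"] cls_carrier) auto
qed

lemma cls_mult_zero_iff: "r \<in> carrier R \<Longrightarrow> s \<in> S \<Longrightarrow> r' \<in> carrier R \<Longrightarrow> s' \<in> S \<Longrightarrow>
  cls (r, s) \<otimes>\<^bsub>loc R S\<^esub> cls (r', s') = \<zero>\<^bsub>loc R S\<^esub> \<longleftrightarrow> (\<exists>t\<in>S. t \<otimes> (r \<otimes> r') = \<zero>)"
  by (simp add: mult_cls cls_zero_iff Sc)

end

definition VD :: "('a, 'm) ring_scheme \<Rightarrow> 'a set \<Rightarrow> bool" where
  "VD R S \<longleftrightarrow> \<zero>\<^bsub>R\<^esub> \<notin> S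
    \<and> (\<forall>x\<in>carrier R. \<forall>y\<in>carrier R. \<forall>t\<in>S. t \<otimes>\<^bsub>R\<^esub> (x \<otimes>\<^bsub>R\<^esub> y) = \<zero>\<^bsub>R\<^esub> \<longrightarrow>
        (\<exists>u\<in>S. u \<otimes>\<^bsub>R\<^esub> x = \<zero>\<^bsub>R\<^esub>) \<or> (\<exists>u\<in>S. u \<otimes>\<^bsub>R\<^esub> y = \<zero>\<^bsub>R\<^esub>))
    \<and> (\<forall>x\<in>carrier R. \<forall>y\<in>carrier R. (\<exists>c\<in>carrier R. \<exists>u\<in>S. u \<otimes>\<^bsub>R\<^esub> y = x \<otimes>\<^bsub>R\<^esub> c)
        \<or> (\<exists>c\<in>carrier R. \<exists>u\<in>S. u \<otimes>\<^bsub>R\<^esub> x = y \<otimes>\<^bsub>R\<^esub> c))"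

context mset begin

lemma valuation_domain_loc_iff: "valuation_domain (loc R S) \<longleftrightarrow> VD R S"
proof
  assume vd: "valuation_domain (loc R S)"
  then interpret L: "domain" "loc R S" unfolding valuation_domain_def by blast
  have "\<zero> \<notin> S" using L.one_not_zero loc_one_zero_iff by blast
  moreover have "\<forall>x\<in>carrier R. \<forall>y\<in>carrier R. \<forall>t\<in>S. t \<otimes> (x \<otimes> y) = \<zero> \<longrightarrow>
        (\<exists>u\<in>S. u \<otimes> x = \<zero>) \<or> (\<exists>u\<in>S. u \<otimes> y = \<zero>)"
  proof (intro ballI impI)
    fix x y t assume xy: "x \<in> carrier R" "y \<in> carrier R" "t \<in> S" "t \<otimes> (x \<otimes> y) = \<zero>"
    then have "cls (x, \<one>) \<otimes>\<^bsub>loc R S\<^esub> cls (y, \<one>) = \<zero>\<^bsub>loc R S\<^esub>"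
      by (subst cls_mult_zero_iff) (auto simp: Sc)
    then have "cls (x, \<one>) = \<zero>\<^bsub>loc R S\<^esub> \<or> cls (y, \<one>) = \<zero>\<^bsub>loc R S\<^esub>"
      using xy by (intro L.integral) (auto intro!: cls_carrier simp: Sc)
    then show "(\<exists>u\<in>S. u \<otimes> x = \<zero>) \<or> (\<exists>u\<in>S. u \<otimes> y = \<zero>)"
      using xy by (simp add: cls_zero_iff Sc)
  qed
  moreover have "\<forall>x\<in>carrier R. \<forall>y\<in>carrier R. (\<exists>c\<in>carrier R. \<exists>u\<in>S. u \<otimes> y = x \<otimes> c)
        \<or> (\<exists>c\<in>carrier R. \<exists>u\<in>S. u \<otimes> x = y \<otimes> c)"
  proof (intro ballI)
    fix x y assume xy: "x \<in> carrier R" "y \<in> carrier R"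
    have "cls (x, \<one>) divides\<^bsub>loc R S\<^esub> cls (y, \<one>) \<or> cls (y, \<one>) divides\<^bsub>loc R S\<^esub> cls (x, \<one>)"
      using vd xy unfolding valuation_domain_def using cls_carrier[of x \<one>] cls_carrier[of y \<one>] one_S by blast
    then show "(\<exists>c\<in>carrier R. \<exists>u\<in>S. u \<otimes> y = x \<otimes> c) \<or> (\<exists>c\<in>carrier R. \<exists>u\<in>S. u \<otimes> x = y \<otimes> c)"
      using xy by (simp add: cls_divides_iff Sc)
  qed
  ultimately show "VD R S" unfolding VD_def by blast
next
  assume vd: "VD R S"
  interpret L: cring "loc R S" by (rule loc_cring)
  have dom: "domain (loc R S)"
  proof (rule domain.intro)
    show "cring (loc R S)" by (rule loc_cring)
    show "domain_axioms (loc R S)"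
    proof
      show "\<one>\<^bsub>loc R S\<^esub> \<noteq> \<zero>\<^bsub>loc R S\<^esub>" using vd loc_one_zero_iff unfolding VD_def by blast
    next
      fix a b assume ab: "a \<otimes>\<^bsub>loc R S\<^esub> b = \<zero>\<^bsub>loc R S\<^esub>" "a \<in> carrier (loc R S)" "b \<in> carrier (loc R S)"
      obtain r s where a: "r \<in> carrier R" "s \<in> S" "a = cls (r, s)" using ab(2) by (elim carrier_locE)
      obtain r' s' where b: "r' \<in> carrier R" "s' \<in> S" "b = cls (r', s')" using ab(3) by (elim carrier_locE)
      obtain t where "t \<in> S" "t \<otimes> (r \<otimes> r') = \<zero>" using ab a b cls_mult_zero_iff by blast
      then have "(\<exists>u\<in>S. u \<otimes> r = \<zero>) \<or> (\<exists>u\<in>S. u \<otimes> r' = \<zero>)"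
        using vd a b unfolding VD_def by blast
      then show "a = \<zero>\<^bsub>loc R S\<^esub> \<or> b = \<zero>\<^bsub>loc R S\<^esub>" using a b by (simp add: cls_zero_iff)
    qed
  qed
  moreover have "\<forall>x\<in>carrier (loc R S). \<forall>y\<in>carrier (loc R S). x divides\<^bsub>loc R S\<^esub> y \<or> y divides\<^bsub>loc R S\<^esub> x"
  proof (intro ballI)
    fix x y assume "x \<in> carrier (loc R S)" "y \<in> carrier (loc R S)"
    then obtain r s r' s' where a: "r \<in> carrier R" "s \<in> S" "x = cls (r, s)"
      and b: "r' \<in> carrier R" "s' \<in> S" "y = cls (r', s')" by (elim carrier_locE) metis
    then show "x divides\<^bsub>loc R S\<^esub> y \<or> y divides\<^bsub>loc R S\<^esub> x"
      using vd unfolding VD_def by (simp add: cls_divides_iff)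
  qed
  ultimately show "valuation_domain (loc R S)" unfolding valuation_domain_def by blast
qed

lemma loc_ext_zero_iff:
  assumes "I \<subseteq> carrier R"
  shows "loc_ext R S I = {\<zero>\<^bsub>loc R S\<^esub>} \<longleftrightarrow> (\<forall>i\<in>I. \<exists>t\<in>S. t \<otimes> i = \<zero>)"
proof -
  interpret L: cring "loc R S" by (rule loc_cring)
  have can: "\<And>i. i \<in> I \<Longrightarrow> loc_can R S i = cls (i, \<one>) \<and> cls (i, \<one>) \<in> carrier (loc R S)"
    using assms one_S by (auto simp: loc_can_def intro!: cls_carrier)
  show ?thesis
  proof
    assume h: "loc_ext R S I = {\<zero>\<^bsub>loc R S\<^esub>}"
    show "\<forall>i\<in>I. \<exists>t\<in>S. t \<otimes> i = \<zero>"
    proof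
      fix i assume i: "i \<in> I"
      have "loc_can R S i \<in> loc_ext R S I" unfolding loc_ext_def genideal_def using i by blast
      then have "cls (i, \<one>) = \<zero>\<^bsub>loc R S\<^esub>" using h can i by auto
      then show "\<exists>t\<in>S. t \<otimes> i = \<zero>" using i assms by (subst (asm) cls_zero_iff) (auto simp: Sc)
    qed
  next
    assume h: "\<forall>i\<in>I. \<exists>t\<in>S. t \<otimes> i = \<zero>"
    have sub: "loc_can R S ` I \<subseteq> {\<zero>\<^bsub>loc R S\<^esub>}"
    proof
      fix x assume "x \<in> loc_can R S ` I"
      then obtain i where i: "i \<in> I" "x = loc_can R S i" by blast
      have "cls (i, \<one>) = \<zero>\<^bsub>loc R S\<^esub>" using h i assms one_S cls_zero_iff[of i \<one>] by auto
      then show "x \<in> {\<zero>\<^bsub>loc R S\<^esub>}" using can i by simp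
    qed
    have "loc_ext R S I \<subseteq> {\<zero>\<^bsub>loc R S\<^esub>}"
      unfolding loc_ext_def by (rule L.genideal_minimal[OF L.zeroideal sub])
    moreover have "\<zero>\<^bsub>loc R S\<^esub> \<in> loc_ext R S I"
    proof -
      have "loc_can R S ` I \<subseteq> carrier (loc R S)" using can by auto
      then have "ideal (loc_ext R S I) (loc R S)" unfolding loc_ext_def by (rule L.genideal_ideal)
      then show ?thesis by (simp add: additive_subgroup.zero_closed ideal.axioms(1))
    qed
    ultimately show "loc_ext R S I = {\<zero>\<^bsub>loc R S\<^esub>}" by blast
  qed
qed

end

lemma RDP_mult: "(a, y) \<otimes>\<^bsub>RDirProd A B\<^esub> (a', y') = (a \<otimes>\<^bsub>A\<^esub> a', y \<otimes>\<^bsub>B\<^esub> y')"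
  unfolding RDirProd_def DirProd_def monoid.extend_def by simp
lemma RDP_add: "(a, y) \<oplus>\<^bsub>RDirProd A B\<^esub> (a', y') = (a \<oplus>\<^bsub>A\<^esub> a', y \<oplus>\<^bsub>B\<^esub> y')"
  unfolding RDirProd_def DirProd_def monoid.extend_def by simp
lemma RDP_zero: "\<zero>\<^bsub>RDirProd A B\<^esub> = (\<zero>\<^bsub>A\<^esub>, \<zero>\<^bsub>B\<^esub>)"
  unfolding RDirProd_def DirProd_def monoid.extend_def by simp
lemma RDP_one: "\<one>\<^bsub>RDirProd A B\<^esub> = (\<one>\<^bsub>A\<^esub>, \<one>\<^bsub>B\<^esub>)"
  unfolding RDirProd_def DirProd_def monoid.extend_def by simp

lemma amalg_ops: "monoid.mult (amalg A B f J) = monoid.mult (RDirProd A B)"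
  "ring.add (amalg A B f J) = ring.add (RDirProd A B)"
  "ring.zero (amalg A B f J) = ring.zero (RDirProd A B)"
  "monoid.one (amalg A B f J) = monoid.one (RDirProd A B)"
  "carrier (amalg A B f J) = {(a, f a \<oplus>\<^bsub>B\<^esub> j) | a j. a \<in> carrier A \<and> j \<in> J}"
  by (simp_all add: amalg_def)

lemma amalg_mult: "(a, y) \<otimes>\<^bsub>amalg A B f J\<^esub> (a', y') = (a \<otimes>\<^bsub>A\<^esub> a', y \<otimes>\<^bsub>B\<^esub> y')"
  unfolding amalg_ops by (rule RDP_mult)
lemma amalg_add: "(a, y) \<oplus>\<^bsub>amalg A B f J\<^esub> (a', y') = (a \<oplus>\<^bsub>A\<^esub> a', y \<oplus>\<^bsub>B\<^esub> y')"
  unfolding amalg_ops by (rule RDP_add)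
lemma amalg_zero: "\<zero>\<^bsub>amalg A B f J\<^esub> = (\<zero>\<^bsub>A\<^esub>, \<zero>\<^bsub>B\<^esub>)"
  unfolding amalg_ops by (rule RDP_zero)
lemma amalg_one: "\<one>\<^bsub>amalg A B f J\<^esub> = (\<one>\<^bsub>A\<^esub>, \<one>\<^bsub>B\<^esub>)"
  unfolding amalg_ops by (rule RDP_one)

locale amal = A: cring A + B: cring B for A (structure) and B (structure) +
  fixes f J assumes hom: "f \<in> ring_hom A B" and J: "ideal J B"
begin

abbreviation "D \<equiv> amalg A B f J"

lemma f_carr: "a \<in> carrier A \<Longrightarrow> f a \<in> carrier B" using hom by (simp add: ring_hom_closed)
lemma f_mult: "a \<in> carrier A \<Longrightarrow> b \<in> carrier A \<Longrightarrow> f (a \<otimes>\<^bsub>A\<^esub> b) = f a \<otimes>\<^bsub>B\<^esub> f b"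
  using hom by (simp add: ring_hom_mult)
lemma f_add: "a \<in> carrier A \<Longrightarrow> b \<in> carrier A \<Longrightarrow> f (a \<oplus>\<^bsub>A\<^esub> b) = f a \<oplus>\<^bsub>B\<^esub> f b"
  using hom by (simp add: ring_hom_add)
lemma f_one: "f \<one>\<^bsub>A\<^esub> = \<one>\<^bsub>B\<^esub>" using hom by (simp add: ring_hom_one)
lemma f_zero: "f \<zero>\<^bsub>A\<^esub> = \<zero>\<^bsub>B\<^esub>"
  using ring_hom_zero[OF hom A.ring_axioms B.ring_axioms] .

lemma J_carr: "j \<in> J \<Longrightarrow> j \<in> carrier B" by (rule ideal.Icarr[OF J])

lemmas D_carrier = amalg_ops(5)[of A B f J]
lemmas D_mult = amalg_mult[where A=A and B=B and f=f and J=J]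
  and D_add = amalg_add[where A=A and B=B and f=f and J=J]
  and D_zero = amalg_zero[of A B f J] and D_one = amalg_one[of A B f J]


lemma f_neg: "a \<in> carrier A \<Longrightarrow> f (\<ominus>\<^bsub>A\<^esub> a) = \<ominus>\<^bsub>B\<^esub> f a"
proof -
  assume a: "a \<in> carrier A"
  interpret h: ring_hom_ring A B f by (rule ring_hom_ringI2[OF A.ring_axioms B.ring_axioms hom])
  show ?thesis using a by (rule h.hom_a_inv)
qed

lemma J_add: "j \<in> J \<Longrightarrow> j' \<in> J \<Longrightarrow> j \<oplus>\<^bsub>B\<^esub> j' \<in> J"
  using J by (simp add: additive_subgroup.a_closed ideal.axioms(1))
lemma J_lmult: "j \<in> J \<Longrightarrow> x \<in> carrier B \<Longrightarrow> x \<otimes>\<^bsub>B\<^esub> j \<in> J"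
  using J by (simp add: ideal.I_l_closed)
lemma J_rmult: "j \<in> J \<Longrightarrow> x \<in> carrier B \<Longrightarrow> j \<otimes>\<^bsub>B\<^esub> x \<in> J"
  using J by (simp add: ideal.I_r_closed)
lemma J_zero: "\<zero>\<^bsub>B\<^esub> \<in> J"
  using J by (simp add: additive_subgroup.zero_closed ideal.axioms(1))
lemma J_neg: "j \<in> J \<Longrightarrow> \<ominus>\<^bsub>B\<^esub> j \<in> J"
  using J by (simp add: additive_subgroup.a_inv_closed ideal.axioms(1))

lemma D_mem_iff: "(a, y) \<in> carrier D \<longleftrightarrow> a \<in> carrier A \<and> y \<in> carrier B \<and> y \<ominus>\<^bsub>B\<^esub> f a \<in> J"
proof
  assume "(a, y) \<in> carrier D"
  then obtain j where "a \<in> carrier A" "j \<in> J" "y = f a \<oplus>\<^bsub>B\<^esub> j" unfolding D_carrier by blast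
  moreover then have "y \<ominus>\<^bsub>B\<^esub> f a = j" using f_carr J_carr
    by (simp add: B.minus_eq B.a_ac B.r_neg)
  ultimately show "a \<in> carrier A \<and> y \<in> carrier B \<and> y \<ominus>\<^bsub>B\<^esub> f a \<in> J" using f_carr J_carr by auto
next
  assume h: "a \<in> carrier A \<and> y \<in> carrier B \<and> y \<ominus>\<^bsub>B\<^esub> f a \<in> J"
  then have "y = f a \<oplus>\<^bsub>B\<^esub> (y \<ominus>\<^bsub>B\<^esub> f a)" using f_carr
    by (simp add: B.minus_eq) (metis B.a_comm B.add.inv_closed B.l_neg B.a_assoc B.r_zero B.add.m_closed)
  then show "(a, y) \<in> carrier D" unfolding D_carrier using h by blast
qed

lemma D_memI: "a \<in> carrier A \<Longrightarrow> j \<in> J \<Longrightarrow> (a, f a \<oplus>\<^bsub>B\<^esub> j) \<in> carrier D"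
  unfolding D_carrier by blast

lemma D_memE: assumes "x \<in> carrier D"
  obtains a j where "x = (a, f a \<oplus>\<^bsub>B\<^esub> j)" "a \<in> carrier A" "j \<in> J"
  using assms unfolding D_carrier by blast

lemma D_fa: "a \<in> carrier A \<Longrightarrow> (a, f a) \<in> carrier D"
  using D_memI[of a "\<zero>\<^bsub>B\<^esub>"] J_zero f_carr by simp

lemma D_zj: "j \<in> J \<Longrightarrow> (\<zero>\<^bsub>A\<^esub>, j) \<in> carrier D"
  using D_memI[of "\<zero>\<^bsub>A\<^esub>" j] J_carr by (simp add: f_zero)

lemma D_k0: "k \<in> carrier A \<Longrightarrow> f k \<in> J \<Longrightarrow> (k, \<zero>\<^bsub>B\<^esub>) \<in> carrier D"
  using D_memI[of k "\<ominus>\<^bsub>B\<^esub> f k"] J_neg f_carr by (simp add: B.r_neg)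

lemma D_cring: "cring D"
proof (rule cringI)
  show "abelian_group D"
  proof (rule abelian_groupI)
    fix x y assume "x \<in> carrier D" "y \<in> carrier D"
    then show "x \<oplus>\<^bsub>D\<^esub> y \<in> carrier D"
      by (elim D_memE) (simp add: D_add, metis D_memI A.add.m_closed f_add f_carr J_carr J_add B.a_ac B.add.m_closed)
  next
    show "\<zero>\<^bsub>D\<^esub> \<in> carrier D" using D_zj[OF J_zero] by (simp add: D_zero)
  next
    fix x y z assume "x \<in> carrier D" "y \<in> carrier D" "z \<in> carrier D"
    then show "x \<oplus>\<^bsub>D\<^esub> y \<oplus>\<^bsub>D\<^esub> z = x \<oplus>\<^bsub>D\<^esub> (y \<oplus>\<^bsub>D\<^esub> z)"
      by (elim D_memE) (simp add: D_add A.a_ac B.a_ac f_carr J_carr)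
  next
    fix x y assume "x \<in> carrier D" "y \<in> carrier D"
    then show "x \<oplus>\<^bsub>D\<^esub> y = y \<oplus>\<^bsub>D\<^esub> x"
      by (elim D_memE) (simp add: D_add A.a_ac B.a_ac f_carr J_carr)
  next
    fix x assume "x \<in> carrier D"
    then show "\<zero>\<^bsub>D\<^esub> \<oplus>\<^bsub>D\<^esub> x = x"
      by (elim D_memE) (simp add: D_add D_zero f_carr J_carr)
  next
    fix x assume "x \<in> carrier D"
    then obtain a j where x: "x = (a, f a \<oplus>\<^bsub>B\<^esub> j)" "a \<in> carrier A" "j \<in> J" by (elim D_memE)
    have "(\<ominus>\<^bsub>A\<^esub> a, f (\<ominus>\<^bsub>A\<^esub> a) \<oplus>\<^bsub>B\<^esub> \<ominus>\<^bsub>B\<^esub> j) \<in> carrier D" using x J_neg by (intro D_memI) auto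
    moreover have "f (\<ominus>\<^bsub>A\<^esub> a) = \<ominus>\<^bsub>B\<^esub> f a"
      using x by (simp add: f_neg)
    ultimately show "\<exists>y\<in>carrier D. y \<oplus>\<^bsub>D\<^esub> x = \<zero>\<^bsub>D\<^esub>"
      using x by (intro bexI[of _ "(\<ominus>\<^bsub>A\<^esub> a, \<ominus>\<^bsub>B\<^esub> f a \<oplus>\<^bsub>B\<^esub> \<ominus>\<^bsub>B\<^esub> j)"])
        (auto simp: D_add D_zero f_carr J_carr A.l_neg B.minus_add B.a_ac B.l_neg B.r_neg)
  qed
next
  show "comm_monoid D"
  proof (rule comm_monoidI)
    fix x y assume "x \<in> carrier D" "y \<in> carrier D"
    then obtain a j a' j' where x: "x = (a, f a \<oplus>\<^bsub>B\<^esub> j)" "a \<in> carrier A" "j \<in> J"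
      and y: "y = (a', f a' \<oplus>\<^bsub>B\<^esub> j')" "a' \<in> carrier A" "j' \<in> J" by (elim D_memE) metis
    have "(f a \<oplus>\<^bsub>B\<^esub> j) \<otimes>\<^bsub>B\<^esub> (f a' \<oplus>\<^bsub>B\<^esub> j') = f (a \<otimes>\<^bsub>A\<^esub> a') \<oplus>\<^bsub>B\<^esub>
       (f a \<otimes>\<^bsub>B\<^esub> j' \<oplus>\<^bsub>B\<^esub> j \<otimes>\<^bsub>B\<^esub> (f a' \<oplus>\<^bsub>B\<^esub> j'))"
      using x y by (simp add: f_mult f_carr J_carr B.l_distr B.r_distr B.a_ac)
    moreover have "f a \<otimes>\<^bsub>B\<^esub> j' \<oplus>\<^bsub>B\<^esub> j \<otimes>\<^bsub>B\<^esub> (f a' \<oplus>\<^bsub>B\<^esub> j') \<in> J"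
      using x y by (intro J_add J_lmult J_rmult) (auto simp: f_carr J_carr)
    ultimately show "x \<otimes>\<^bsub>D\<^esub> y \<in> carrier D" using x y
      by (simp add: D_mult) (metis D_memI A.m_closed)
  next
    show "\<one>\<^bsub>D\<^esub> \<in> carrier D" using D_fa[of "\<one>\<^bsub>A\<^esub>"] by (simp add: D_one f_one)
  next
    fix x y z assume "x \<in> carrier D" "y \<in> carrier D" "z \<in> carrier D"
    then show "x \<otimes>\<^bsub>D\<^esub> y \<otimes>\<^bsub>D\<^esub> z = x \<otimes>\<^bsub>D\<^esub> (y \<otimes>\<^bsub>D\<^esub> z)"
      by (elim D_memE) (simp add: D_mult A.m_ac B.m_ac f_carr J_carr)
  next
    fix x y assume "x \<in> carrier D" "y \<in> carrier D"
    then show "x \<otimes>\<^bsub>D\<^esub> y = y \<otimes>\<^bsub>D\<^esub> x"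
      by (elim D_memE) (simp add: D_mult A.m_ac B.m_ac f_carr J_carr)
  next
    fix x assume "x \<in> carrier D"
    then show "\<one>\<^bsub>D\<^esub> \<otimes>\<^bsub>D\<^esub> x = x"
      by (elim D_memE) (simp add: D_mult D_one f_carr J_carr)
  qed
next
  fix x y z assume "x \<in> carrier D" "y \<in> carrier D" "z \<in> carrier D"
  then show "(x \<oplus>\<^bsub>D\<^esub> y) \<otimes>\<^bsub>D\<^esub> z = x \<otimes>\<^bsub>D\<^esub> z \<oplus>\<^bsub>D\<^esub> y \<otimes>\<^bsub>D\<^esub> z"
    by (elim D_memE) (simp add: D_mult D_add A.l_distr B.l_distr f_carr J_carr)
qed

end

lemma mset_prime: fixes R (structure) assumes "primeideal P R" shows "mset R (carrier R - P)"
proof -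
  interpret primeideal P R by fact
  have "\<one> \<notin> P" using one_imp_carrier I_notcarr by blast
  show ?thesis
  proof
    show "carrier R - P \<subseteq> carrier R" by blast
    show "\<one> \<in> carrier R - P" using \<open>\<one> \<notin> P\<close> by simp
    fix s t assume "s \<in> carrier R - P" "t \<in> carrier R - P"
    then show "s \<otimes> t \<in> carrier R - P" using I_prime by auto
  qed
qed

lemma VD_mono: fixes R (structure)
  assumes "mset R S" "mset R S'" "S \<subseteq> S'" "\<zero>\<^bsub>R\<^esub> \<notin> S'" "VD R S"
  shows "VD R S'"
proof -
  interpret mset R S by fact
  interpret S': mset R S' by fact
  have V1: "\<And>x y t. x \<in> carrier R \<Longrightarrow> y \<in> carrier R \<Longrightarrow> t \<in> S \<Longrightarrow> t \<otimes> (x \<otimes> y) = \<zero> \<Longrightarrow>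
        (\<exists>u\<in>S. u \<otimes> x = \<zero>) \<or> (\<exists>u\<in>S. u \<otimes> y = \<zero>)" using assms(5) unfolding VD_def by blast
  have V2: "\<And>x y. x \<in> carrier R \<Longrightarrow> y \<in> carrier R \<Longrightarrow> (\<exists>c\<in>carrier R. \<exists>u\<in>S. u \<otimes> y = x \<otimes> c)
        \<or> (\<exists>c\<in>carrier R. \<exists>u\<in>S. u \<otimes> x = y \<otimes> c)" using assms(5) unfolding VD_def by blast
  have "\<forall>x\<in>carrier R. \<forall>y\<in>carrier R. \<forall>t\<in>S'. t \<otimes> (x \<otimes> y) = \<zero> \<longrightarrow>
        (\<exists>u\<in>S'. u \<otimes> x = \<zero>) \<or> (\<exists>u\<in>S'. u \<otimes> y = \<zero>)"
  proof (intro ballI impI)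
    fix x y t assume h: "x \<in> carrier R" "y \<in> carrier R" "t \<in> S'" "t \<otimes> (x \<otimes> y) = \<zero>"
    have tc: "t \<in> carrier R" using h S'.S_carr by blast
    have "\<one> \<otimes> ((t \<otimes> x) \<otimes> y) = \<zero>" using h tc by (simp add: m_assoc)
    then have "(\<exists>u\<in>S. u \<otimes> (t \<otimes> x) = \<zero>) \<or> (\<exists>u\<in>S. u \<otimes> y = \<zero>)"
      using V1[of "t \<otimes> x" y \<one>] h tc one_S by blast
    then show "(\<exists>u\<in>S'. u \<otimes> x = \<zero>) \<or> (\<exists>u\<in>S'. u \<otimes> y = \<zero>)"
    proof
      assume "\<exists>u\<in>S. u \<otimes> (t \<otimes> x) = \<zero>"
      then obtain u where u: "u \<in> S" "u \<otimes> (t \<otimes> x) = \<zero>" by blast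
      then have "(\<exists>v\<in>S. v \<otimes> u = \<zero>) \<or> (\<exists>v\<in>S. v \<otimes> t = \<zero>) \<or> (\<exists>v\<in>S. v \<otimes> x = \<zero>)"
      proof -
        have "\<one> \<otimes> ((u \<otimes> t) \<otimes> x) = \<zero>" using u tc h S_carr by (simp add: m_assoc)
        then have "(\<exists>v\<in>S. v \<otimes> (u \<otimes> t) = \<zero>) \<or> (\<exists>v\<in>S. v \<otimes> x = \<zero>)"
          using V1[of "u \<otimes> t" x \<one>] u tc h S_carr one_S by blast
        moreover have "\<exists>v\<in>S. v \<otimes> (u \<otimes> t) = \<zero> \<Longrightarrow> (\<exists>v\<in>S. v \<otimes> u = \<zero>) \<or> (\<exists>v\<in>S. v \<otimes> t = \<zero>)"
          using V1[of u t] u tc S_carr by blast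
        ultimately show ?thesis by blast
      qed
      moreover have "\<And>v w. v \<in> S' \<Longrightarrow> w \<in> S' \<Longrightarrow> v \<otimes> w \<noteq> \<zero>"
        using assms(4) S'.S_mult by metis
      ultimately show ?thesis using u h assms(3) by blast
    next
      assume "\<exists>u\<in>S. u \<otimes> y = \<zero>" then show ?thesis using assms(3) by blast
    qed
  qed
  moreover have "\<forall>x\<in>carrier R. \<forall>y\<in>carrier R. (\<exists>c\<in>carrier R. \<exists>u\<in>S'. u \<otimes> y = x \<otimes> c)
        \<or> (\<exists>c\<in>carrier R. \<exists>u\<in>S'. u \<otimes> x = y \<otimes> c)" using V2 assms(3) by blast
  ultimately show ?thesis using assms(4) unfolding VD_def by blast
qed

lemma (in cring) max_exists:
  assumes "ideal I R" "\<one> \<notin> I"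
  shows "\<exists>M. maximalideal M R \<and> I \<subseteq> M"
proof -
  define AA where "AA = {K. ideal K R \<and> I \<subseteq> K \<and> \<one> \<notin> K}"
  have "\<exists>M\<in>AA. \<forall>Z\<in>AA. M \<subseteq> Z \<longrightarrow> Z = M"
  proof (rule subset_Zorn_nonempty)
    show "AA \<noteq> {}" using assms unfolding AA_def by blast
  next
    fix C assume C: "C \<noteq> {}" "subset.chain AA C"
    then have ch: "subset.chain {K. ideal K R} C" unfolding pred_on.chain_def AA_def by blast
    have "ideal (\<Union>C) R" using chain_Union_is_ideal[OF ch] C(1) by simp
    moreover have "I \<subseteq> \<Union>C" using C unfolding pred_on.chain_def AA_def by blast
    moreover have "\<one> \<notin> \<Union>C" using C unfolding pred_on.chain_def AA_def by blast
    ultimately show "\<Union>C \<in> AA" unfolding AA_def by blast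
  qed
  then obtain M where M0: "M \<in> AA" and M3: "\<forall>Z\<in>AA. M \<subseteq> Z \<longrightarrow> Z = M" by (rule bexE)
  have M: "ideal M R" "I \<subseteq> M" "\<one> \<notin> M" "\<And>Z. Z \<in> AA \<Longrightarrow> M \<subseteq> Z \<Longrightarrow> Z = M"
    using M0 M3 unfolding AA_def by auto
  have "maximalideal M R"
  proof (rule maximalidealI)
    show "ideal M R" by fact
    show "carrier R \<noteq> M" using M(3) by blast
    fix K assume K: "ideal K R" "M \<subseteq> K" "K \<subseteq> carrier R"
    show "K = M \<or> K = carrier R"
    proof (cases "\<one> \<in> K")
      case True then show ?thesis using ideal.one_imp_carrier[OF K(1)] by blast
    next
      case False then have "K \<in> AA" using M K unfolding AA_def by auto
      then show ?thesis using M(4) K(2) by blast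
    qed
  qed
  then show ?thesis using M by blast
qed

lemma (in ring) ideal_cancel:
  assumes "ideal I R" "x \<in> I" "y \<in> carrier R" "x \<oplus> y \<in> I"
  shows "y \<in> I"
proof -
  interpret ideal I R by fact
  have xc: "x \<in> carrier R" using assms(2) Icarr by blast
  have "y = (\<ominus> x) \<oplus> (x \<oplus> y)" using xc assms(3) by (simp add: a_assoc[symmetric] l_neg)
  moreover have "\<ominus> x \<in> I" using assms(2) by (simp add: a_inv_closed)
  ultimately show ?thesis using assms(4) a_closed by metis
qed

context amal begin

lemma S_set_mset: assumes "primeideal M A" shows "mset B (S_set A B f J M)"
proof -
  interpret P: primeideal M A by fact
  have one: "\<one>\<^bsub>A\<^esub> \<notin> M" using P.one_imp_carrier P.I_notcarr by blast
  show ?thesis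
  proof
    show "S_set A B f J M \<subseteq> carrier B" unfolding S_set_def using f_carr J_carr by auto
    show "\<one>\<^bsub>B\<^esub> \<in> S_set A B f J M" unfolding S_set_def using one J_zero
      by (intro CollectI exI[of _ "\<one>\<^bsub>A\<^esub>"] exI[of _ "\<zero>\<^bsub>B\<^esub>"]) (simp add: f_one)
    fix s t assume "s \<in> S_set A B f J M" "t \<in> S_set A B f J M"
    then obtain a j b k where s: "s = f a \<oplus>\<^bsub>B\<^esub> j" "a \<in> carrier A - M" "j \<in> J"
      and t: "t = f b \<oplus>\<^bsub>B\<^esub> k" "b \<in> carrier A - M" "k \<in> J" unfolding S_set_def by blast
    have "s \<otimes>\<^bsub>B\<^esub> t = f (a \<otimes>\<^bsub>A\<^esub> b) \<oplus>\<^bsub>B\<^esub> (f a \<otimes>\<^bsub>B\<^esub> k \<oplus>\<^bsub>B\<^esub> j \<otimes>\<^bsub>B\<^esub> (f b \<oplus>\<^bsub>B\<^esub> k))"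
      using s t by (simp add: f_mult f_carr J_carr B.l_distr B.r_distr B.a_ac)
    moreover have "f a \<otimes>\<^bsub>B\<^esub> k \<oplus>\<^bsub>B\<^esub> j \<otimes>\<^bsub>B\<^esub> (f b \<oplus>\<^bsub>B\<^esub> k) \<in> J"
      using s t by (intro J_add J_lmult J_rmult) (auto simp: f_carr J_carr)
    moreover have "a \<otimes>\<^bsub>A\<^esub> b \<in> carrier A - M" using s t P.I_prime by auto
    ultimately show "s \<otimes>\<^bsub>B\<^esub> t \<in> S_set A B f J M" unfolding S_set_def by blast
  qed
qed

lemma fst_hom: "fst \<in> ring_hom D A"
  by (rule ring_hom_memI) (auto simp: D_mem_iff D_mult D_add D_one elim!: D_memE)

lemma snd_hom: "snd \<in> ring_hom D B"
  by (rule ring_hom_memI) (auto elim!: D_memE simp: D_mult D_add D_one f_carr J_carr)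

lemma g_hom: "(\<lambda>a. (a, f a)) \<in> ring_hom A D"
  by (rule ring_hom_memI) (auto simp: D_fa D_mult D_add D_one f_mult f_add f_one)

lemma fst_hom_ring: "ring_hom_ring D A fst"
  using D_cring fst_hom by (intro ring_hom_ringI2) (auto simp: cring_def A.ring_axioms)
lemma snd_hom_ring: "ring_hom_ring D B snd"
  using D_cring snd_hom by (intro ring_hom_ringI2) (auto simp: cring_def B.ring_axioms)
lemma g_hom_ring: "ring_hom_ring A D (\<lambda>a. (a, f a))"
  using D_cring g_hom by (intro ring_hom_ringI2) (auto simp: cring_def A.ring_axioms)
lemma f_hom_ring: "ring_hom_ring A B f"
  using hom by (intro ring_hom_ringI2) (auto simp: A.ring_axioms B.ring_axioms)

lemma D_neg: assumes "(a, y) \<in> carrier D" shows "\<ominus>\<^bsub>D\<^esub> (a, y) = (\<ominus>\<^bsub>A\<^esub> a, \<ominus>\<^bsub>B\<^esub> y)"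
proof -
  interpret Dr: cring D by (rule D_cring)
  have ay: "a \<in> carrier A" "y \<in> carrier B" "y \<ominus>\<^bsub>B\<^esub> f a \<in> J" using assms D_mem_iff by auto
  have "(\<ominus>\<^bsub>A\<^esub> a, \<ominus>\<^bsub>B\<^esub> y) \<in> carrier D"
  proof -
    have "\<ominus>\<^bsub>B\<^esub> y \<ominus>\<^bsub>B\<^esub> f (\<ominus>\<^bsub>A\<^esub> a) = \<ominus>\<^bsub>B\<^esub> (y \<ominus>\<^bsub>B\<^esub> f a)"
      using ay by (simp add: f_neg f_carr B.minus_eq B.minus_add)
    then show ?thesis using ay J_neg by (simp add: D_mem_iff)
  qed
  moreover have "(\<ominus>\<^bsub>A\<^esub> a, \<ominus>\<^bsub>B\<^esub> y) \<oplus>\<^bsub>D\<^esub> (a, y) = \<zero>\<^bsub>D\<^esub>"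
    using ay by (simp add: D_add D_zero A.l_neg B.l_neg)
  ultimately show ?thesis using assms by (metis Dr.minus_equality)
qed

end

lemma VD_D1: "VD R S \<Longrightarrow> x \<in> carrier R \<Longrightarrow> y \<in> carrier R \<Longrightarrow> t \<in> S \<Longrightarrow> t \<otimes>\<^bsub>R\<^esub> (x \<otimes>\<^bsub>R\<^esub> y) = \<zero>\<^bsub>R\<^esub> \<Longrightarrow>
   (\<exists>u\<in>S. u \<otimes>\<^bsub>R\<^esub> x = \<zero>\<^bsub>R\<^esub>) \<or> (\<exists>u\<in>S. u \<otimes>\<^bsub>R\<^esub> y = \<zero>\<^bsub>R\<^esub>)"
  unfolding VD_def by blast
lemma VD_D2: "VD R S \<Longrightarrow> x \<in> carrier R \<Longrightarrow> y \<in> carrier R \<Longrightarrow>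
   (\<exists>c\<in>carrier R. \<exists>u\<in>S. u \<otimes>\<^bsub>R\<^esub> y = x \<otimes>\<^bsub>R\<^esub> c) \<or> (\<exists>c\<in>carrier R. \<exists>u\<in>S. u \<otimes>\<^bsub>R\<^esub> x = y \<otimes>\<^bsub>R\<^esub> c)"
  unfolding VD_def by blast

context amal begin

abbreviation "K \<equiv> {a \<in> carrier A. f a \<in> J}"

lemma D_pair: "x \<in> carrier D \<Longrightarrow> \<exists>u z. x = (u, z) \<and> u \<in> carrier A \<and> z \<in> carrier B \<and> z \<ominus>\<^bsub>B\<^esub> f u \<in> J"
  by (cases x) (simp add: D_mem_iff)

lemma dir1_A:
  assumes all: "\<And>P. primeideal P D \<Longrightarrow> VD D (carrier D - P)"
  shows "wgldim_le1 A"
  unfolding wgldim_le1_def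
proof (intro allI impI)
  fix p assume p: "primeideal p A"
  interpret Mp: mset A "carrier A - p" by (rule mset_prime[OF p])
  interpret pp: primeideal p A by (rule p)
  define P where "P = {x \<in> carrier D. fst x \<in> p}"
  have P: "primeideal P D" unfolding P_def
    by (rule ring_hom_ring.primeideal_vimage[OF fst_hom_ring D_cring p])
  have vd: "VD D (carrier D - P)" by (rule all[OF P])
  have V1D: "\<And>Xa Ya Ta. Xa \<in> carrier D \<Longrightarrow> Ya \<in> carrier D \<Longrightarrow> Ta \<in> carrier D - P \<Longrightarrow>
      Ta \<otimes>\<^bsub>D\<^esub> (Xa \<otimes>\<^bsub>D\<^esub> Ya) = \<zero>\<^bsub>D\<^esub> \<Longrightarrow>
      (\<exists>U\<in>carrier D - P. U \<otimes>\<^bsub>D\<^esub> Xa = \<zero>\<^bsub>D\<^esub>) \<or> (\<exists>U\<in>carrier D - P. U \<otimes>\<^bsub>D\<^esub> Ya = \<zero>\<^bsub>D\<^esub>)"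
    using vd unfolding VD_def by blast
  have V2D: "\<And>Xa Ya. Xa \<in> carrier D \<Longrightarrow> Ya \<in> carrier D \<Longrightarrow>
      (\<exists>C\<in>carrier D. \<exists>U\<in>carrier D - P. U \<otimes>\<^bsub>D\<^esub> Ya = Xa \<otimes>\<^bsub>D\<^esub> C) \<or>
      (\<exists>C\<in>carrier D. \<exists>U\<in>carrier D - P. U \<otimes>\<^bsub>D\<^esub> Xa = Ya \<otimes>\<^bsub>D\<^esub> C)"
    using vd unfolding VD_def by blast
  have notP: "\<And>u z. (u, z) \<in> carrier D - P \<Longrightarrow> u \<in> carrier A - p"
    unfolding P_def by (auto simp: D_mem_iff)
  have "VD A (carrier A - p)"
    unfolding VD_def
  proof (intro conjI ballI impI)
    show "\<zero>\<^bsub>A\<^esub> \<notin> carrier A - p" by (simp add: additive_subgroup.zero_closed pp.is_additive_subgroup)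
  next
    fix x y t assume h: "x \<in> carrier A" "y \<in> carrier A" "t \<in> carrier A - p" "t \<otimes>\<^bsub>A\<^esub> (x \<otimes>\<^bsub>A\<^esub> y) = \<zero>\<^bsub>A\<^esub>"
    have T: "(t, f t) \<in> carrier D - P" using h unfolding P_def by (auto simp: D_fa)
    have "(t, f t) \<otimes>\<^bsub>D\<^esub> ((x, f x) \<otimes>\<^bsub>D\<^esub> (y, f y)) = \<zero>\<^bsub>D\<^esub>"
      using h by (simp add: D_mult D_zero f_mult[symmetric] f_zero)
    then have "(\<exists>U\<in>carrier D - P. U \<otimes>\<^bsub>D\<^esub> (x, f x) = \<zero>\<^bsub>D\<^esub>) \<or> (\<exists>U\<in>carrier D - P. U \<otimes>\<^bsub>D\<^esub> (y, f y) = \<zero>\<^bsub>D\<^esub>)"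
      using V1D[OF D_fa D_fa T] h by blast
    then show "(\<exists>u\<in>carrier A - p. u \<otimes>\<^bsub>A\<^esub> x = \<zero>\<^bsub>A\<^esub>) \<or> (\<exists>u\<in>carrier A - p. u \<otimes>\<^bsub>A\<^esub> y = \<zero>\<^bsub>A\<^esub>)"
    proof
      assume "\<exists>U\<in>carrier D - P. U \<otimes>\<^bsub>D\<^esub> (x, f x) = \<zero>\<^bsub>D\<^esub>"
      then obtain u z where "(u, z) \<in> carrier D - P" "(u, z) \<otimes>\<^bsub>D\<^esub> (x, f x) = \<zero>\<^bsub>D\<^esub>" by auto
      then show ?thesis using notP by (auto simp: D_mult D_zero)
    next
      assume "\<exists>U\<in>carrier D - P. U \<otimes>\<^bsub>D\<^esub> (y, f y) = \<zero>\<^bsub>D\<^esub>"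
      then obtain u z where "(u, z) \<in> carrier D - P" "(u, z) \<otimes>\<^bsub>D\<^esub> (y, f y) = \<zero>\<^bsub>D\<^esub>" by auto
      then show ?thesis using notP by (auto simp: D_mult D_zero)
    qed
  next
    fix x y assume h: "x \<in> carrier A" "y \<in> carrier A"
    from V2D[OF D_fa[OF h(1)] D_fa[OF h(2)]]
    show "(\<exists>c\<in>carrier A. \<exists>u\<in>carrier A - p. u \<otimes>\<^bsub>A\<^esub> y = x \<otimes>\<^bsub>A\<^esub> c) \<or>
          (\<exists>c\<in>carrier A. \<exists>u\<in>carrier A - p. u \<otimes>\<^bsub>A\<^esub> x = y \<otimes>\<^bsub>A\<^esub> c)"
    proof
      assume "\<exists>C\<in>carrier D. \<exists>U\<in>carrier D - P. U \<otimes>\<^bsub>D\<^esub> (y, f y) = (x, f x) \<otimes>\<^bsub>D\<^esub> C"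
      then obtain c w u z where "(c, w) \<in> carrier D" "(u, z) \<in> carrier D - P"
        "(u, z) \<otimes>\<^bsub>D\<^esub> (y, f y) = (x, f x) \<otimes>\<^bsub>D\<^esub> (c, w)" by auto
      then show ?thesis using notP by (auto simp: D_mult D_mem_iff)
    next
      assume "\<exists>C\<in>carrier D. \<exists>U\<in>carrier D - P. U \<otimes>\<^bsub>D\<^esub> (x, f x) = (y, f y) \<otimes>\<^bsub>D\<^esub> C"
      then obtain c w u z where "(c, w) \<in> carrier D" "(u, z) \<in> carrier D - P"
        "(u, z) \<otimes>\<^bsub>D\<^esub> (x, f x) = (y, f y) \<otimes>\<^bsub>D\<^esub> (c, w)" by auto
      then show ?thesis using notP by (auto simp: D_mult D_mem_iff)
    qed
  qed
  then show "valuation_domain (loc A (carrier A - p))" using Mp.valuation_domain_loc_iff by blast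
qed


lemma dir1_B:
  assumes all: "\<And>P. primeideal P D \<Longrightarrow> VD D (carrier D - P)"
    and N: "maximalideal N B" and nJ: "\<not> J \<subseteq> N"
  shows "VD B (carrier B - N)"
proof -
  have Np: "primeideal N B" by (rule B.maximalideal_prime[OF N])
  interpret pN: primeideal N B by (rule Np)
  obtain j0 where j0: "j0 \<in> J" "j0 \<notin> N" using nJ by blast
  have j0c: "j0 \<in> carrier B" using j0 J_carr by blast
  define P where "P = {x \<in> carrier D. snd x \<in> N}"
  have P: "primeideal P D" unfolding P_def
    by (rule ring_hom_ring.primeideal_vimage[OF snd_hom_ring D_cring Np])
  have vd: "VD D (carrier D - P)" by (rule all[OF P])
  have notP: "\<And>u z. (u, z) \<in> carrier D - P \<Longrightarrow> z \<in> carrier B - N"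
    unfolding P_def by (auto simp: D_mem_iff)
  have Z: "\<And>x. x \<in> carrier B \<Longrightarrow> (\<zero>\<^bsub>A\<^esub>, j0 \<otimes>\<^bsub>B\<^esub> x) \<in> carrier D"
    using j0 by (intro D_zj J_rmult) auto
  have j0x: "\<And>x. x \<in> carrier B - N \<Longrightarrow> j0 \<otimes>\<^bsub>B\<^esub> x \<in> carrier B - N"
    using j0 j0c pN.I_prime by auto
  show "VD B (carrier B - N)"
    unfolding VD_def
  proof (intro conjI ballI impI)
    show "\<zero>\<^bsub>B\<^esub> \<notin> carrier B - N" by (simp add: additive_subgroup.zero_closed pN.is_additive_subgroup)
  next
    fix x y t assume h: "x \<in> carrier B" "y \<in> carrier B" "t \<in> carrier B - N" "t \<otimes>\<^bsub>B\<^esub> (x \<otimes>\<^bsub>B\<^esub> y) = \<zero>\<^bsub>B\<^esub>"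
    have T: "(\<zero>\<^bsub>A\<^esub>, j0 \<otimes>\<^bsub>B\<^esub> t) \<in> carrier D - P" using Z[of t] j0x[OF h(3)] h unfolding P_def by auto
    have "(j0 \<otimes>\<^bsub>B\<^esub> t) \<otimes>\<^bsub>B\<^esub> ((j0 \<otimes>\<^bsub>B\<^esub> x) \<otimes>\<^bsub>B\<^esub> (j0 \<otimes>\<^bsub>B\<^esub> y)) = (j0 \<otimes>\<^bsub>B\<^esub> j0 \<otimes>\<^bsub>B\<^esub> j0) \<otimes>\<^bsub>B\<^esub> (t \<otimes>\<^bsub>B\<^esub> (x \<otimes>\<^bsub>B\<^esub> y))"
      using h j0c by (simp add: B.m_ac)
    then have "(\<zero>\<^bsub>A\<^esub>, j0 \<otimes>\<^bsub>B\<^esub> t) \<otimes>\<^bsub>D\<^esub> ((\<zero>\<^bsub>A\<^esub>, j0 \<otimes>\<^bsub>B\<^esub> x) \<otimes>\<^bsub>D\<^esub> (\<zero>\<^bsub>A\<^esub>, j0 \<otimes>\<^bsub>B\<^esub> y)) = \<zero>\<^bsub>D\<^esub>"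
      using h j0c by (simp add: D_mult D_zero)
    then have "(\<exists>U\<in>carrier D - P. U \<otimes>\<^bsub>D\<^esub> (\<zero>\<^bsub>A\<^esub>, j0 \<otimes>\<^bsub>B\<^esub> x) = \<zero>\<^bsub>D\<^esub>) \<or>
               (\<exists>U\<in>carrier D - P. U \<otimes>\<^bsub>D\<^esub> (\<zero>\<^bsub>A\<^esub>, j0 \<otimes>\<^bsub>B\<^esub> y) = \<zero>\<^bsub>D\<^esub>)"
      using VD_D1[OF vd Z[OF h(1)] Z[OF h(2)] T] by blast
    then show "(\<exists>u\<in>carrier B - N. u \<otimes>\<^bsub>B\<^esub> x = \<zero>\<^bsub>B\<^esub>) \<or> (\<exists>u\<in>carrier B - N. u \<otimes>\<^bsub>B\<^esub> y = \<zero>\<^bsub>B\<^esub>)"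
    proof
      assume "\<exists>U\<in>carrier D - P. U \<otimes>\<^bsub>D\<^esub> (\<zero>\<^bsub>A\<^esub>, j0 \<otimes>\<^bsub>B\<^esub> x) = \<zero>\<^bsub>D\<^esub>"
      then obtain u z where uz: "(u, z) \<in> carrier D - P" "(u, z) \<otimes>\<^bsub>D\<^esub> (\<zero>\<^bsub>A\<^esub>, j0 \<otimes>\<^bsub>B\<^esub> x) = \<zero>\<^bsub>D\<^esub>" by auto
      then have z: "z \<in> carrier B - N" using notP by blast
      have "(z \<otimes>\<^bsub>B\<^esub> j0) \<otimes>\<^bsub>B\<^esub> x = \<zero>\<^bsub>B\<^esub>" using uz(2) z j0c h by (simp add: D_mult D_zero B.m_assoc)
      moreover have "z \<otimes>\<^bsub>B\<^esub> j0 \<in> carrier B - N" using j0x[OF z] j0c z by (simp add: B.m_comm)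
      ultimately show ?thesis by blast
    next
      assume "\<exists>U\<in>carrier D - P. U \<otimes>\<^bsub>D\<^esub> (\<zero>\<^bsub>A\<^esub>, j0 \<otimes>\<^bsub>B\<^esub> y) = \<zero>\<^bsub>D\<^esub>"
      then obtain u z where uz: "(u, z) \<in> carrier D - P" "(u, z) \<otimes>\<^bsub>D\<^esub> (\<zero>\<^bsub>A\<^esub>, j0 \<otimes>\<^bsub>B\<^esub> y) = \<zero>\<^bsub>D\<^esub>" by auto
      then have z: "z \<in> carrier B - N" using notP by blast
      have "(z \<otimes>\<^bsub>B\<^esub> j0) \<otimes>\<^bsub>B\<^esub> y = \<zero>\<^bsub>B\<^esub>" using uz(2) z j0c h by (simp add: D_mult D_zero B.m_assoc)
      moreover have "z \<otimes>\<^bsub>B\<^esub> j0 \<in> carrier B - N" using j0x[OF z] j0c z by (simp add: B.m_comm)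
      ultimately show ?thesis by blast
    qed
  next
    fix x y assume h: "x \<in> carrier B" "y \<in> carrier B"
    have key: "\<And>x y. x \<in> carrier B \<Longrightarrow> y \<in> carrier B \<Longrightarrow>
       \<exists>C\<in>carrier D. \<exists>U\<in>carrier D - P. U \<otimes>\<^bsub>D\<^esub> (\<zero>\<^bsub>A\<^esub>, j0 \<otimes>\<^bsub>B\<^esub> y) = (\<zero>\<^bsub>A\<^esub>, j0 \<otimes>\<^bsub>B\<^esub> x) \<otimes>\<^bsub>D\<^esub> C \<Longrightarrow>
       \<exists>c\<in>carrier B. \<exists>u\<in>carrier B - N. u \<otimes>\<^bsub>B\<^esub> y = x \<otimes>\<^bsub>B\<^esub> c"
    proof -
      fix x y assume h: "x \<in> carrier B" "y \<in> carrier B"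
        "\<exists>C\<in>carrier D. \<exists>U\<in>carrier D - P. U \<otimes>\<^bsub>D\<^esub> (\<zero>\<^bsub>A\<^esub>, j0 \<otimes>\<^bsub>B\<^esub> y) = (\<zero>\<^bsub>A\<^esub>, j0 \<otimes>\<^bsub>B\<^esub> x) \<otimes>\<^bsub>D\<^esub> C"
      then obtain c w u z where cw: "(c, w) \<in> carrier D" and uz: "(u, z) \<in> carrier D - P"
        and e: "(u, z) \<otimes>\<^bsub>D\<^esub> (\<zero>\<^bsub>A\<^esub>, j0 \<otimes>\<^bsub>B\<^esub> y) = (\<zero>\<^bsub>A\<^esub>, j0 \<otimes>\<^bsub>B\<^esub> x) \<otimes>\<^bsub>D\<^esub> (c, w)" by auto
      have z: "z \<in> carrier B - N" using notP uz by blast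
      have w: "w \<in> carrier B" using cw by (simp add: D_mem_iff)
      have "z \<otimes>\<^bsub>B\<^esub> (j0 \<otimes>\<^bsub>B\<^esub> y) = (j0 \<otimes>\<^bsub>B\<^esub> x) \<otimes>\<^bsub>B\<^esub> w" using e by (simp add: D_mult)
      then have "(z \<otimes>\<^bsub>B\<^esub> j0) \<otimes>\<^bsub>B\<^esub> y = x \<otimes>\<^bsub>B\<^esub> (j0 \<otimes>\<^bsub>B\<^esub> w)" using z w j0c h by (simp add: B.m_ac)
      moreover have "z \<otimes>\<^bsub>B\<^esub> j0 \<in> carrier B - N" using j0x[OF z] j0c z by (simp add: B.m_comm)
      ultimately show "\<exists>c\<in>carrier B. \<exists>u\<in>carrier B - N. u \<otimes>\<^bsub>B\<^esub> y = x \<otimes>\<^bsub>B\<^esub> c"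
        using w j0c by blast
    qed
    show "(\<exists>c\<in>carrier B. \<exists>u\<in>carrier B - N. u \<otimes>\<^bsub>B\<^esub> y = x \<otimes>\<^bsub>B\<^esub> c) \<or>
          (\<exists>c\<in>carrier B. \<exists>u\<in>carrier B - N. u \<otimes>\<^bsub>B\<^esub> x = y \<otimes>\<^bsub>B\<^esub> c)"
      using VD_D2[OF vd Z[OF h(1)] Z[OF h(2)]] key[OF h(1,2)] key[OF h(2,1)] by blast
  qed
qed


lemma D_decomp: "(a, y) \<in> carrier D \<Longrightarrow> \<exists>j\<in>J. y = f a \<oplus>\<^bsub>B\<^esub> j"
  unfolding D_carrier by blast

lemma S_memI: "u \<in> carrier A - M \<Longrightarrow> j \<in> J \<Longrightarrow> f u \<oplus>\<^bsub>B\<^esub> j \<in> S_set A B f J M"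
  unfolding S_set_def by blast

lemma dir1_C:
  assumes all: "\<And>P. primeideal P D \<Longrightarrow> VD D (carrier D - P)"
    and M: "maximalideal M A"
    and hypM: "loc_induced f B (S_set A B f J M) ` carrier (loc A (carrier A - M))
          = carrier (loc B (S_set A B f J M))
        \<or> loc_ext A (carrier A - M) K \<noteq> {\<zero>\<^bsub>loc A (carrier A - M)\<^esub>}"
  shows "\<forall>j\<in>J. \<exists>t\<in>S_set A B f J M. t \<otimes>\<^bsub>B\<^esub> j = \<zero>\<^bsub>B\<^esub>"
proof -
  have Mp: "primeideal M A" by (rule A.maximalideal_prime[OF M])
  interpret pM: primeideal M A by (rule Mp)
  interpret MA: mset A "carrier A - M" by (rule mset_prime[OF Mp])
  interpret SB: mset B "S_set A B f J M" by (rule S_set_mset[OF Mp])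
  have oneM: "\<one>\<^bsub>A\<^esub> \<notin> M" using pM.one_imp_carrier pM.I_notcarr by blast
  show ?thesis
  proof (cases "\<exists>k\<in>K. \<forall>s\<in>carrier A - M. s \<otimes>\<^bsub>A\<^esub> k \<noteq> \<zero>\<^bsub>A\<^esub>")
    case True
    then obtain k where k: "k \<in> carrier A" "f k \<in> J" "\<And>s. s \<in> carrier A - M \<Longrightarrow> s \<otimes>\<^bsub>A\<^esub> k \<noteq> \<zero>\<^bsub>A\<^esub>"
      by blast
    define P where "P = {x \<in> carrier D. fst x \<in> M}"
    have P: "primeideal P D" unfolding P_def
      by (rule ring_hom_ring.primeideal_vimage[OF fst_hom_ring D_cring Mp])
    have vd: "VD D (carrier D - P)" by (rule all[OF P])
    have notP: "\<And>u z. (u, z) \<in> carrier D - P \<Longrightarrow> u \<in> carrier A - M"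
      unfolding P_def by (auto simp: D_mem_iff)
    show ?thesis
    proof
      fix j assume j: "j \<in> J"
      have jc: "j \<in> carrier B" using j J_carr by blast
      have X: "(\<zero>\<^bsub>A\<^esub>, j) \<in> carrier D" by (rule D_zj[OF j])
      have Y: "(k, \<zero>\<^bsub>B\<^esub>) \<in> carrier D" by (rule D_k0[OF k(1,2)])
      have T: "\<one>\<^bsub>D\<^esub> \<in> carrier D - P"
        using D_fa[of "\<one>\<^bsub>A\<^esub>"] oneM unfolding P_def by (simp add: D_one f_one)
      have "\<one>\<^bsub>D\<^esub> \<otimes>\<^bsub>D\<^esub> ((\<zero>\<^bsub>A\<^esub>, j) \<otimes>\<^bsub>D\<^esub> (k, \<zero>\<^bsub>B\<^esub>)) = \<zero>\<^bsub>D\<^esub>"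
        using k jc by (simp add: D_one D_mult D_zero)
      then have "(\<exists>U\<in>carrier D - P. U \<otimes>\<^bsub>D\<^esub> (\<zero>\<^bsub>A\<^esub>, j) = \<zero>\<^bsub>D\<^esub>) \<or>
                 (\<exists>U\<in>carrier D - P. U \<otimes>\<^bsub>D\<^esub> (k, \<zero>\<^bsub>B\<^esub>) = \<zero>\<^bsub>D\<^esub>)"
        using VD_D1[OF vd X Y T] by blast
      then show "\<exists>t\<in>S_set A B f J M. t \<otimes>\<^bsub>B\<^esub> j = \<zero>\<^bsub>B\<^esub>"
      proof
        assume "\<exists>U\<in>carrier D - P. U \<otimes>\<^bsub>D\<^esub> (\<zero>\<^bsub>A\<^esub>, j) = \<zero>\<^bsub>D\<^esub>"
        then obtain u z where uz: "(u, z) \<in> carrier D - P" "(u, z) \<otimes>\<^bsub>D\<^esub> (\<zero>\<^bsub>A\<^esub>, j) = \<zero>\<^bsub>D\<^esub>" by auto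
        have u: "u \<in> carrier A - M" using notP uz by blast
        obtain j' where j': "j' \<in> J" "z = f u \<oplus>\<^bsub>B\<^esub> j'" using D_decomp uz by blast
        have "z \<in> S_set A B f J M" using S_memI[OF u j'(1)] j' by simp
        moreover have "z \<otimes>\<^bsub>B\<^esub> j = \<zero>\<^bsub>B\<^esub>" using uz(2) by (simp add: D_mult D_zero)
        ultimately show ?thesis by blast
      next
        assume "\<exists>U\<in>carrier D - P. U \<otimes>\<^bsub>D\<^esub> (k, \<zero>\<^bsub>B\<^esub>) = \<zero>\<^bsub>D\<^esub>"
        then obtain u z where uz: "(u, z) \<in> carrier D - P" "(u, z) \<otimes>\<^bsub>D\<^esub> (k, \<zero>\<^bsub>B\<^esub>) = \<zero>\<^bsub>D\<^esub>" by auto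
        have u: "u \<in> carrier A - M" using notP uz by blast
        have "u \<otimes>\<^bsub>A\<^esub> k = \<zero>\<^bsub>A\<^esub>" using uz(2) by (simp add: D_mult D_zero)
        then show ?thesis using k(3)[OF u] by blast
      qed
    qed
  next
    case False
    then have ann: "\<forall>k\<in>K. \<exists>s\<in>carrier A - M. s \<otimes>\<^bsub>A\<^esub> k = \<zero>\<^bsub>A\<^esub>" by blast
    have "loc_ext A (carrier A - M) K = {\<zero>\<^bsub>loc A (carrier A - M)\<^esub>}"
      using MA.loc_ext_zero_iff[of K] ann by blast
    then have surj: "loc_induced f B (S_set A B f J M) ` carrier (loc A (carrier A - M))
          = carrier (loc B (S_set A B f J M))" using hypM by blast
    show ?thesis
    proof
      fix j assume j: "j \<in> J"
      have jc: "j \<in> carrier B" using j J_carr by blast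
      have "SB.cls (j, \<one>\<^bsub>B\<^esub>) \<in> carrier (loc B (S_set A B f J M))"
        using jc SB.one_S by (rule SB.cls_carrier)
      then have "SB.cls (j, \<one>\<^bsub>B\<^esub>) \<in> loc_induced f B (S_set A B f J M) ` carrier (loc A (carrier A - M))"
        using surj by simp
      then obtain U where U: "U \<in> carrier (loc A (carrier A - M))"
        "SB.cls (j, \<one>\<^bsub>B\<^esub>) = loc_induced f B (S_set A B f J M) U"
        by (rule imageE) simp
      obtain r s where rs: "r \<in> carrier A" "s \<in> carrier A - M" "U = MA.cls (r, s)"
        using U(1) by (rule MA.carrier_locE)
      obtain a u where au: "loc_rep U = (a, u)" by fastforce
      have auc: "a \<in> carrier A" "u \<in> carrier A - M" using MA.rep_cls[OF rs(1,2)] au rs(3) by auto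
      have li: "loc_induced f B (S_set A B f J M) U = SB.cls (f a, f u)"
        unfolding loc_induced_def au by simp
      have fuS: "f u \<in> S_set A B f J M" using S_memI[OF auc(2) J_zero] f_carr auc by simp
      have "((j, \<one>\<^bsub>B\<^esub>), (f a, f u)) \<in> loc_rel B (S_set A B f J M)"
        using U(2) li SB.cls_eq_iff[of j "\<one>\<^bsub>B\<^esub>" "f a" "f u"] jc SB.one_S f_carr auc fuS by simp
      then obtain t where t: "t \<in> S_set A B f J M" "t \<otimes>\<^bsub>B\<^esub> (j \<otimes>\<^bsub>B\<^esub> f u) = t \<otimes>\<^bsub>B\<^esub> (f a \<otimes>\<^bsub>B\<^esub> \<one>\<^bsub>B\<^esub>)"
        using SB.rel_iff by blast
      obtain s0 j1 where s0: "t = f s0 \<oplus>\<^bsub>B\<^esub> j1" "s0 \<in> carrier A - M" "j1 \<in> J"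
        using t(1) unfolding S_set_def by blast
      have tc: "t \<in> carrier B" using t SB.S_carr by blast
      have fac: "f a \<in> carrier B" "f u \<in> carrier B" "f s0 \<in> carrier B" "j1 \<in> carrier B"
        using auc s0 f_carr J_carr by auto
      have e1: "t \<otimes>\<^bsub>B\<^esub> f a = t \<otimes>\<^bsub>B\<^esub> (j \<otimes>\<^bsub>B\<^esub> f u)" using t(2) fac by simp
      have "t \<otimes>\<^bsub>B\<^esub> (j \<otimes>\<^bsub>B\<^esub> f u) \<in> J"
        using j tc fac by (simp add: J_lmult J_rmult)
      then have tfa: "t \<otimes>\<^bsub>B\<^esub> f a \<in> J" using e1 by simp
      have "t \<otimes>\<^bsub>B\<^esub> f a = j1 \<otimes>\<^bsub>B\<^esub> f a \<oplus>\<^bsub>B\<^esub> f (s0 \<otimes>\<^bsub>A\<^esub> a)"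
        using s0 fac auc by (simp add: B.l_distr f_mult B.a_comm)
      then have "f (s0 \<otimes>\<^bsub>A\<^esub> a) \<in> J"
        using B.ideal_cancel[OF J, of "j1 \<otimes>\<^bsub>B\<^esub> f a" "f (s0 \<otimes>\<^bsub>A\<^esub> a)"] tfa s0 fac auc
        by (simp add: J_rmult f_carr)
      then have "s0 \<otimes>\<^bsub>A\<^esub> a \<in> K" using s0 auc by simp
      then obtain s where s: "s \<in> carrier A - M" "s \<otimes>\<^bsub>A\<^esub> (s0 \<otimes>\<^bsub>A\<^esub> a) = \<zero>\<^bsub>A\<^esub>" using ann by blast
      have sc: "s \<in> carrier A" "s0 \<in> carrier A" "u \<in> carrier A" "a \<in> carrier A" "f s \<in> carrier B"
        using s s0 auc f_carr by auto
      have uss: "u \<otimes>\<^bsub>A\<^esub> (s \<otimes>\<^bsub>A\<^esub> s0) \<in> carrier A - M"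
        using MA.S_mult s s0 auc by blast
      define z where "z = t \<otimes>\<^bsub>B\<^esub> f (u \<otimes>\<^bsub>A\<^esub> (s \<otimes>\<^bsub>A\<^esub> s0))"
      have "z \<in> S_set A B f J M" unfolding z_def
        using SB.S_mult[OF t(1)] S_memI[OF uss J_zero] f_carr uss by simp
      moreover have "z \<otimes>\<^bsub>B\<^esub> j = \<zero>\<^bsub>B\<^esub>"
      proof -
        have "z \<otimes>\<^bsub>B\<^esub> j = (f s \<otimes>\<^bsub>B\<^esub> f s0) \<otimes>\<^bsub>B\<^esub> (t \<otimes>\<^bsub>B\<^esub> (j \<otimes>\<^bsub>B\<^esub> f u))"
          unfolding z_def using sc tc fac jc by (simp add: f_mult B.m_ac)
        also have "\<dots> = (f s \<otimes>\<^bsub>B\<^esub> f s0) \<otimes>\<^bsub>B\<^esub> (t \<otimes>\<^bsub>B\<^esub> f a)" using e1 by simp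
        also have "\<dots> = t \<otimes>\<^bsub>B\<^esub> f (s \<otimes>\<^bsub>A\<^esub> (s0 \<otimes>\<^bsub>A\<^esub> a))"
          using sc tc fac by (simp add: f_mult B.m_ac)
        also have "\<dots> = \<zero>\<^bsub>B\<^esub>" using s(2) tc by (simp add: f_zero)
        finally show ?thesis .
      qed
      ultimately show "\<exists>t\<in>S_set A B f J M. t \<otimes>\<^bsub>B\<^esub> j = \<zero>\<^bsub>B\<^esub>" by blast
    qed
  qed
qed

end

context amal begin

lemma dir2_A:
  assumes hB: "\<And>N. maximalideal N B \<Longrightarrow> \<not> J \<subseteq> N \<Longrightarrow> VD B (carrier B - N)"
    and hC: "\<And>M. maximalideal M A \<Longrightarrow> K \<subseteq> M \<Longrightarrow> \<forall>j\<in>J. \<exists>t\<in>S_set A B f J M. t \<otimes>\<^bsub>B\<^esub> j = \<zero>\<^bsub>B\<^esub>"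
    and P: "primeideal P D" and j0: "j0 \<in> J" "(\<zero>\<^bsub>A\<^esub>, j0) \<notin> P"
  shows "VD D (carrier D - P)"
proof -
  interpret pP: primeideal P D by (rule P)
  interpret Dr: cring D by (rule D_cring)
  have j0c: "j0 \<in> carrier B" using j0 J_carr by blast
  have Z: "\<And>x. x \<in> carrier B \<Longrightarrow> (\<zero>\<^bsub>A\<^esub>, j0 \<otimes>\<^bsub>B\<^esub> x) \<in> carrier D"
    using j0 by (intro D_zj J_rmult) auto
  have Z0: "(\<zero>\<^bsub>A\<^esub>, j0) \<in> carrier D" by (rule D_zj[OF j0(1)])
  have zP: "\<zero>\<^bsub>D\<^esub> \<in> P" by (rule additive_subgroup.zero_closed[OF pP.is_additive_subgroup])
  define q where "q = {y \<in> carrier B. (\<zero>\<^bsub>A\<^esub>, j0 \<otimes>\<^bsub>B\<^esub> y) \<in> P}"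
  have keyq: "\<And>a y. (a, y) \<in> carrier D \<Longrightarrow> (a, y) \<in> P \<longleftrightarrow> y \<in> q"
  proof -
    fix a y assume ay: "(a, y) \<in> carrier D"
    have ac: "a \<in> carrier A" "y \<in> carrier B" using ay by (auto simp: D_mem_iff)
    have e: "(\<zero>\<^bsub>A\<^esub>, j0) \<otimes>\<^bsub>D\<^esub> (a, y) = (\<zero>\<^bsub>A\<^esub>, j0 \<otimes>\<^bsub>B\<^esub> y)" using ac by (simp add: D_mult)
    show "(a, y) \<in> P \<longleftrightarrow> y \<in> q"
    proof
      assume "(a, y) \<in> P"
      then have "(\<zero>\<^bsub>A\<^esub>, j0) \<otimes>\<^bsub>D\<^esub> (a, y) \<in> P" using Z0 pP.I_l_closed by blast
      then show "y \<in> q" unfolding q_def using e ac by simp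
    next
      assume "y \<in> q"
      then have "(\<zero>\<^bsub>A\<^esub>, j0) \<otimes>\<^bsub>D\<^esub> (a, y) \<in> P" unfolding q_def using e by simp
      then show "(a, y) \<in> P" using pP.I_prime[OF Z0 ay] j0(2) by blast
    qed
  qed
  have j0q: "j0 \<notin> q"
  proof
    assume "j0 \<in> q"
    then have "(\<zero>\<^bsub>A\<^esub>, j0) \<otimes>\<^bsub>D\<^esub> (\<zero>\<^bsub>A\<^esub>, j0) \<in> P" unfolding q_def by (simp add: D_mult)
    then show False using pP.I_prime[OF Z0 Z0] j0(2) by blast
  qed
  have lq: "\<And>x y. x \<in> carrier B \<Longrightarrow> y \<in> q \<Longrightarrow> x \<otimes>\<^bsub>B\<^esub> y \<in> q"
  proof -
    fix x y assume x: "x \<in> carrier B" and y: "y \<in> q"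
    have yc: "y \<in> carrier B" using y unfolding q_def by blast
    have "(\<zero>\<^bsub>A\<^esub>, j0 \<otimes>\<^bsub>B\<^esub> x) \<otimes>\<^bsub>D\<^esub> (\<zero>\<^bsub>A\<^esub>, j0 \<otimes>\<^bsub>B\<^esub> y) \<in> P"
      using y Z[OF x] pP.I_l_closed unfolding q_def by blast
    moreover have "(\<zero>\<^bsub>A\<^esub>, j0 \<otimes>\<^bsub>B\<^esub> x) \<otimes>\<^bsub>D\<^esub> (\<zero>\<^bsub>A\<^esub>, j0 \<otimes>\<^bsub>B\<^esub> y)
        = (\<zero>\<^bsub>A\<^esub>, j0) \<otimes>\<^bsub>D\<^esub> (\<zero>\<^bsub>A\<^esub>, j0 \<otimes>\<^bsub>B\<^esub> (x \<otimes>\<^bsub>B\<^esub> y))"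
      using x yc j0c by (simp add: D_mult B.m_ac)
    ultimately have "(\<zero>\<^bsub>A\<^esub>, j0 \<otimes>\<^bsub>B\<^esub> (x \<otimes>\<^bsub>B\<^esub> y)) \<in> P"
      using pP.I_prime[OF Z0 Z[of "x \<otimes>\<^bsub>B\<^esub> y"]] x yc j0(2) by auto
    then show "x \<otimes>\<^bsub>B\<^esub> y \<in> q" unfolding q_def using x yc by simp
  qed
  have qideal: "ideal q B"
  proof (rule idealI)
    show "ring B" by (rule B.ring_axioms)
    show "subgroup q (add_monoid B)"
    proof (rule B.add.subgroupI)
      show "q \<subseteq> carrier B" unfolding q_def by auto
      have "\<zero>\<^bsub>B\<^esub> \<in> q" unfolding q_def using zP j0c by (simp add: D_zero)
      then show "q \<noteq> {}" by blast
    next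
      fix y assume y: "y \<in> q"
      have yc: "y \<in> carrier B" using y unfolding q_def by blast
      have "\<ominus>\<^bsub>D\<^esub> (\<zero>\<^bsub>A\<^esub>, j0 \<otimes>\<^bsub>B\<^esub> y) \<in> P" using y unfolding q_def by (simp add: pP.a_inv_closed)
      moreover have "\<ominus>\<^bsub>D\<^esub> (\<zero>\<^bsub>A\<^esub>, j0 \<otimes>\<^bsub>B\<^esub> y) = (\<zero>\<^bsub>A\<^esub>, j0 \<otimes>\<^bsub>B\<^esub> (\<ominus>\<^bsub>B\<^esub> y))"
        using D_neg[OF Z[OF yc]] yc j0c by (simp add: B.r_minus)
      ultimately show "\<ominus>\<^bsub>B\<^esub> y \<in> q" unfolding q_def using yc by simp
    next
      fix y y' assume y: "y \<in> q" "y' \<in> q"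
      have yc: "y \<in> carrier B" "y' \<in> carrier B" using y unfolding q_def by auto
      have "(\<zero>\<^bsub>A\<^esub>, j0 \<otimes>\<^bsub>B\<^esub> y) \<oplus>\<^bsub>D\<^esub> (\<zero>\<^bsub>A\<^esub>, j0 \<otimes>\<^bsub>B\<^esub> y') \<in> P"
        using y unfolding q_def by (simp add: pP.a_closed)
      then show "y \<oplus>\<^bsub>B\<^esub> y' \<in> q" unfolding q_def using yc j0c
        by (simp add: D_add B.r_distr)
    qed
  next
    fix y x assume "y \<in> q" "x \<in> carrier B" then show "x \<otimes>\<^bsub>B\<^esub> y \<in> q" by (rule lq[rotated])
  next
    fix y x assume y: "y \<in> q" "x \<in> carrier B"
    then have "x \<otimes>\<^bsub>B\<^esub> y \<in> q" by (intro lq)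
    then show "y \<otimes>\<^bsub>B\<^esub> x \<in> q" using y unfolding q_def by (simp add: B.m_comm)
  qed
  have qprime: "primeideal q B"
  proof (rule primeidealI[OF qideal B.is_cring])
    show "carrier B \<noteq> q" using j0q j0c by blast
    fix x y assume xy: "x \<in> carrier B" "y \<in> carrier B" "x \<otimes>\<^bsub>B\<^esub> y \<in> q"
    have "(\<zero>\<^bsub>A\<^esub>, j0) \<otimes>\<^bsub>D\<^esub> (\<zero>\<^bsub>A\<^esub>, j0 \<otimes>\<^bsub>B\<^esub> (x \<otimes>\<^bsub>B\<^esub> y)) \<in> P"
      using xy(3) Z0 pP.I_l_closed unfolding q_def by blast
    moreover have "(\<zero>\<^bsub>A\<^esub>, j0) \<otimes>\<^bsub>D\<^esub> (\<zero>\<^bsub>A\<^esub>, j0 \<otimes>\<^bsub>B\<^esub> (x \<otimes>\<^bsub>B\<^esub> y))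
        = (\<zero>\<^bsub>A\<^esub>, j0 \<otimes>\<^bsub>B\<^esub> x) \<otimes>\<^bsub>D\<^esub> (\<zero>\<^bsub>A\<^esub>, j0 \<otimes>\<^bsub>B\<^esub> y)"
      using xy j0c by (simp add: D_mult B.m_ac)
    ultimately have "(\<zero>\<^bsub>A\<^esub>, j0 \<otimes>\<^bsub>B\<^esub> x) \<in> P \<or> (\<zero>\<^bsub>A\<^esub>, j0 \<otimes>\<^bsub>B\<^esub> y) \<in> P"
      using pP.I_prime[OF Z[OF xy(1)] Z[OF xy(2)]] by simp
    then show "x \<in> q \<or> y \<in> q" unfolding q_def using xy by blast
  qed
  have oneq: "\<one>\<^bsub>B\<^esub> \<notin> q" using qprime primeideal.I_notcarr ideal.one_imp_carrier qideal by blast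
  obtain N where N: "maximalideal N B" "q \<subseteq> N" using B.max_exists[OF qideal oneq] by blast
  have Np: "primeideal N B" by (rule B.maximalideal_prime[OF N(1)])
  have nJ: "\<not> J \<subseteq> N"
  proof
    assume JN: "J \<subseteq> N"
    define K' where "K' = {a \<in> carrier A. f a \<in> N}"
    have K'p: "primeideal K' A" unfolding K'_def
      by (rule ring_hom_ring.primeideal_vimage[OF f_hom_ring A.is_cring Np])
    have "\<one>\<^bsub>A\<^esub> \<notin> K'" using K'p primeideal.I_notcarr ideal.one_imp_carrier primeideal.axioms(1) by blast
    then obtain M where M: "maximalideal M A" "K' \<subseteq> M"
      using A.max_exists[OF primeideal.axioms(1)[OF K'p]] by blast
    have "K \<subseteq> M" using JN M(2) unfolding K'_def by blast
    then obtain t where t: "t \<in> S_set A B f J M" "t \<otimes>\<^bsub>B\<^esub> j0 = \<zero>\<^bsub>B\<^esub>" using hC[OF M(1)] j0(1) by blast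
    obtain s j' where s: "t = f s \<oplus>\<^bsub>B\<^esub> j'" "s \<in> carrier A - M" "j' \<in> J" using t(1) unfolding S_set_def by blast
    have tN: "t \<notin> N"
    proof
      assume "t \<in> N"
      then have "j' \<oplus>\<^bsub>B\<^esub> f s \<in> N" using s f_carr J_carr by (simp add: B.a_comm)
      then have "f s \<in> N" using B.ideal_cancel[OF primeideal.axioms(1)[OF Np], of j' "f s"] JN s f_carr by auto
      then show False using s M(2) unfolding K'_def by auto
    qed
    then have "t \<notin> q" using N(2) by blast
    moreover have tc: "t \<in> carrier B" using s f_carr J_carr by auto
    ultimately have "(\<zero>\<^bsub>A\<^esub>, j0 \<otimes>\<^bsub>B\<^esub> t) \<notin> P" unfolding q_def by blast
    moreover have "j0 \<otimes>\<^bsub>B\<^esub> t = \<zero>\<^bsub>B\<^esub>" using t(2) tc j0c by (simp add: B.m_comm)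
    ultimately show False using zP by (simp add: D_zero)
  qed
  have vdN: "VD B (carrier B - N)" by (rule hB[OF N(1) nJ])
  have vdq: "VD B (carrier B - q)"
  proof (rule VD_mono[OF mset_prime[OF Np] mset_prime[OF qprime] _ _ vdN])
    show "carrier B - N \<subseteq> carrier B - q" using N(2) by blast
    show "\<zero>\<^bsub>B\<^esub> \<notin> carrier B - q" using qideal by (simp add: additive_subgroup.zero_closed ideal.axioms(1))
  qed
  have j0u: "\<And>u. u \<in> carrier B - q \<Longrightarrow> j0 \<otimes>\<^bsub>B\<^esub> u \<in> carrier B - q"
    using primeideal.I_prime[OF qprime] j0q j0c by auto
  have notP: "\<And>u. u \<in> carrier B - q \<Longrightarrow> (\<zero>\<^bsub>A\<^esub>, j0 \<otimes>\<^bsub>B\<^esub> u) \<in> carrier D - P"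
    using keyq Z j0u by blast
  show "VD D (carrier D - P)"
    unfolding VD_def
  proof (intro conjI ballI impI)
    show "\<zero>\<^bsub>D\<^esub> \<notin> carrier D - P" using zP by blast
  next
    fix Xa Ya Ta assume h: "Xa \<in> carrier D" "Ya \<in> carrier D" "Ta \<in> carrier D - P" "Ta \<otimes>\<^bsub>D\<^esub> (Xa \<otimes>\<^bsub>D\<^esub> Ya) = \<zero>\<^bsub>D\<^esub>"
    obtain a y where Xa: "Xa = (a, y)" "a \<in> carrier A" "y \<in> carrier B" using D_pair[OF h(1)] by blast
    obtain a' y' where Ya: "Ya = (a', y')" "a' \<in> carrier A" "y' \<in> carrier B" using D_pair[OF h(2)] by blast
    obtain c w where Ta: "Ta = (c, w)" "c \<in> carrier A" "w \<in> carrier B" using D_pair h(3) by blast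
    have wq: "w \<in> carrier B - q" using keyq h(3) Ta by blast
    have "w \<otimes>\<^bsub>B\<^esub> (y \<otimes>\<^bsub>B\<^esub> y') = \<zero>\<^bsub>B\<^esub>" using h(4) Xa Ya Ta by (simp add: D_mult D_zero)
    then have "(\<exists>u\<in>carrier B - q. u \<otimes>\<^bsub>B\<^esub> y = \<zero>\<^bsub>B\<^esub>) \<or> (\<exists>u\<in>carrier B - q. u \<otimes>\<^bsub>B\<^esub> y' = \<zero>\<^bsub>B\<^esub>)"
      using VD_D1[OF vdq Xa(3) Ya(3) wq] by blast
    moreover have "\<And>b z. b \<in> carrier A \<Longrightarrow> z \<in> carrier B \<Longrightarrow> \<exists>u\<in>carrier B - q. u \<otimes>\<^bsub>B\<^esub> z = \<zero>\<^bsub>B\<^esub> \<Longrightarrow>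
        \<exists>U\<in>carrier D - P. U \<otimes>\<^bsub>D\<^esub> (b, z) = \<zero>\<^bsub>D\<^esub>"
    proof -
      fix b z assume bz: "b \<in> carrier A" "z \<in> carrier B" "\<exists>u\<in>carrier B - q. u \<otimes>\<^bsub>B\<^esub> z = \<zero>\<^bsub>B\<^esub>"
      then obtain u where u: "u \<in> carrier B - q" "u \<otimes>\<^bsub>B\<^esub> z = \<zero>\<^bsub>B\<^esub>" by blast
      have "(\<zero>\<^bsub>A\<^esub>, j0 \<otimes>\<^bsub>B\<^esub> u) \<otimes>\<^bsub>D\<^esub> (b, z) = \<zero>\<^bsub>D\<^esub>"
        using u bz j0c by (simp add: D_mult D_zero B.m_assoc)
      then show "\<exists>U\<in>carrier D - P. U \<otimes>\<^bsub>D\<^esub> (b, z) = \<zero>\<^bsub>D\<^esub>" using notP[OF u(1)] by blast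
    qed
    ultimately show "(\<exists>U\<in>carrier D - P. U \<otimes>\<^bsub>D\<^esub> Xa = \<zero>\<^bsub>D\<^esub>) \<or> (\<exists>U\<in>carrier D - P. U \<otimes>\<^bsub>D\<^esub> Ya = \<zero>\<^bsub>D\<^esub>)"
      using Xa Ya by blast
  next
    fix Xa Ya assume h: "Xa \<in> carrier D" "Ya \<in> carrier D"
    obtain a y where Xa: "Xa = (a, y)" "a \<in> carrier A" "y \<in> carrier B" using D_pair[OF h(1)] by blast
    obtain a' y' where Ya: "Ya = (a', y')" "a' \<in> carrier A" "y' \<in> carrier B" using D_pair[OF h(2)] by blast
    have key: "\<And>b z b' z'. b \<in> carrier A \<Longrightarrow> z \<in> carrier B \<Longrightarrow> b' \<in> carrier A \<Longrightarrow> z' \<in> carrier B \<Longrightarrow>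
        \<exists>c\<in>carrier B. \<exists>u\<in>carrier B - q. u \<otimes>\<^bsub>B\<^esub> z' = z \<otimes>\<^bsub>B\<^esub> c \<Longrightarrow>
        \<exists>C\<in>carrier D. \<exists>U\<in>carrier D - P. U \<otimes>\<^bsub>D\<^esub> (b', z') = (b, z) \<otimes>\<^bsub>D\<^esub> C"
    proof -
      fix b z b' z' assume bz: "b \<in> carrier A" "z \<in> carrier B" "b' \<in> carrier A" "z' \<in> carrier B"
        "\<exists>c\<in>carrier B. \<exists>u\<in>carrier B - q. u \<otimes>\<^bsub>B\<^esub> z' = z \<otimes>\<^bsub>B\<^esub> c"
      then obtain c u where cu: "c \<in> carrier B" "u \<in> carrier B - q" "u \<otimes>\<^bsub>B\<^esub> z' = z \<otimes>\<^bsub>B\<^esub> c" by blast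
      have "(\<zero>\<^bsub>A\<^esub>, j0 \<otimes>\<^bsub>B\<^esub> u) \<otimes>\<^bsub>D\<^esub> (b', z') = (\<zero>\<^bsub>A\<^esub>, j0 \<otimes>\<^bsub>B\<^esub> (u \<otimes>\<^bsub>B\<^esub> z'))"
        using cu(2) bz j0c by (simp add: D_mult B.m_assoc)
      also have "\<dots> = (\<zero>\<^bsub>A\<^esub>, j0 \<otimes>\<^bsub>B\<^esub> (z \<otimes>\<^bsub>B\<^esub> c))" using cu(3) by simp
      also have "\<dots> = (b, z) \<otimes>\<^bsub>D\<^esub> (\<zero>\<^bsub>A\<^esub>, j0 \<otimes>\<^bsub>B\<^esub> c)"
        using cu(1) bz j0c by (simp add: D_mult B.m_ac)
      finally show "\<exists>C\<in>carrier D. \<exists>U\<in>carrier D - P. U \<otimes>\<^bsub>D\<^esub> (b', z') = (b, z) \<otimes>\<^bsub>D\<^esub> C"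
        using notP[OF cu(2)] Z[OF cu(1)] by blast
    qed
    show "(\<exists>C\<in>carrier D. \<exists>U\<in>carrier D - P. U \<otimes>\<^bsub>D\<^esub> Ya = Xa \<otimes>\<^bsub>D\<^esub> C) \<or>
          (\<exists>C\<in>carrier D. \<exists>U\<in>carrier D - P. U \<otimes>\<^bsub>D\<^esub> Xa = Ya \<otimes>\<^bsub>D\<^esub> C)"
      using VD_D2[OF vdq Xa(3) Ya(3)] key[OF Xa(2,3) Ya(2,3)] key[OF Ya(2,3) Xa(2,3)] Xa(1) Ya(1) by blast
  qed
qed

end

context amal begin

lemma dir2_B:
  assumes wA: "wgldim_le1 A"
    and hC: "\<And>M. maximalideal M A \<Longrightarrow> K \<subseteq> M \<Longrightarrow> \<forall>j\<in>J. \<exists>t\<in>S_set A B f J M. t \<otimes>\<^bsub>B\<^esub> j = \<zero>\<^bsub>B\<^esub>"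
    and P: "primeideal P D" and allJ: "\<And>j. j \<in> J \<Longrightarrow> (\<zero>\<^bsub>A\<^esub>, j) \<in> P"
  shows "VD D (carrier D - P)"
proof -
  interpret Dr: cring D by (rule D_cring)
  interpret pP: primeideal P D by (rule P)
  have zP: "\<zero>\<^bsub>D\<^esub> \<in> P" by (rule additive_subgroup.zero_closed[OF pP.is_additive_subgroup])
  define p where "p = {a \<in> carrier A. (a, f a) \<in> P}"
  have pprime: "primeideal p A"
    using ring_hom_ring.primeideal_vimage[OF g_hom_ring A.is_cring P] unfolding p_def by simp
  interpret pp: primeideal p A by (rule pprime)
  have keyp: "\<And>a y. (a, y) \<in> carrier D \<Longrightarrow> (a, y) \<in> P \<longleftrightarrow> a \<in> p"
  proof -
    fix a y assume ay: "(a, y) \<in> carrier D"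
    obtain j where j: "j \<in> J" "y = f a \<oplus>\<^bsub>B\<^esub> j" using D_decomp[OF ay] by blast
    have ac: "a \<in> carrier A" using ay by (simp add: D_mem_iff)
    have e1: "(a, y) = (a, f a) \<oplus>\<^bsub>D\<^esub> (\<zero>\<^bsub>A\<^esub>, j)" using j ac by (simp add: D_add)
    have e2: "(a, y) = (\<zero>\<^bsub>A\<^esub>, j) \<oplus>\<^bsub>D\<^esub> (a, f a)" using j ac J_carr f_carr by (simp add: D_add B.a_comm)
    show "(a, y) \<in> P \<longleftrightarrow> a \<in> p"
    proof
      assume "(a, y) \<in> P"
      then have "(a, f a) \<in> P"
        using Dr.ideal_cancel[OF pP.is_ideal allJ[OF j(1)] D_fa[OF ac]] e2 by simp
      then show "a \<in> p" unfolding p_def using ac by simp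
    next
      assume "a \<in> p"
      then have "(a, f a) \<in> P" unfolding p_def by simp
      then show "(a, y) \<in> P" using e1 allJ[OF j(1)] pP.a_closed by simp
    qed
  qed
  have vdA: "VD A (carrier A - p)"
    using wA pprime mset.valuation_domain_loc_iff[OF mset_prime[OF pprime]]
    unfolding wgldim_le1_def by blast
  have notP: "\<And>u z. (u, z) \<in> carrier D \<Longrightarrow> u \<in> carrier A - p \<Longrightarrow> (u, z) \<in> carrier D - P"
    using keyp by blast
  have pmult: "\<And>u s. u \<in> carrier A - p \<Longrightarrow> s \<in> carrier A - p \<Longrightarrow> u \<otimes>\<^bsub>A\<^esub> s \<in> carrier A - p"
    using pp.I_prime by auto
  have H12: "(\<forall>b z. (b, z) \<in> carrier D \<longrightarrow> (\<exists>u\<in>carrier A - p. u \<otimes>\<^bsub>A\<^esub> b = \<zero>\<^bsub>A\<^esub>) \<longrightarrow>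
        (\<exists>U\<in>carrier D - P. U \<otimes>\<^bsub>D\<^esub> (b, z) = \<zero>\<^bsub>D\<^esub>)) \<and> (\<forall>b z b' z'. (b, z) \<in> carrier D \<longrightarrow> (b', z') \<in> carrier D \<longrightarrow>
        (\<exists>c\<in>carrier A. \<exists>u\<in>carrier A - p. u \<otimes>\<^bsub>A\<^esub> b' = b \<otimes>\<^bsub>A\<^esub> c) \<longrightarrow>
        (\<exists>C\<in>carrier D. \<exists>U\<in>carrier D - P. U \<otimes>\<^bsub>D\<^esub> (b', z') = (b, z) \<otimes>\<^bsub>D\<^esub> C))"
    proof (cases "\<exists>a0\<in>K. a0 \<notin> p")
      case True
      then obtain a0 where a0: "a0 \<in> carrier A" "f a0 \<in> J" "a0 \<notin> p" by blast
      have k0: "\<And>u. u \<in> carrier A \<Longrightarrow> (u \<otimes>\<^bsub>A\<^esub> a0, \<zero>\<^bsub>B\<^esub>) \<in> carrier D"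
        using a0 by (intro D_k0) (auto simp: f_mult f_carr J_lmult)
      have h1: "\<forall>b z. (b, z) \<in> carrier D \<longrightarrow> (\<exists>u\<in>carrier A - p. u \<otimes>\<^bsub>A\<^esub> b = \<zero>\<^bsub>A\<^esub>) \<longrightarrow>
        (\<exists>U\<in>carrier D - P. U \<otimes>\<^bsub>D\<^esub> (b, z) = \<zero>\<^bsub>D\<^esub>)"
      proof (intro allI impI)
        fix b z assume bz: "(b, z) \<in> carrier D" "\<exists>u\<in>carrier A - p. u \<otimes>\<^bsub>A\<^esub> b = \<zero>\<^bsub>A\<^esub>"
        then obtain u where u: "u \<in> carrier A - p" "u \<otimes>\<^bsub>A\<^esub> b = \<zero>\<^bsub>A\<^esub>" by blast
        have bc: "b \<in> carrier A" "z \<in> carrier B" using bz by (auto simp: D_mem_iff)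
        have "(u \<otimes>\<^bsub>A\<^esub> a0, \<zero>\<^bsub>B\<^esub>) \<otimes>\<^bsub>D\<^esub> (b, z) = (a0 \<otimes>\<^bsub>A\<^esub> (u \<otimes>\<^bsub>A\<^esub> b), \<zero>\<^bsub>B\<^esub>)"
          using u bc a0 by (simp add: D_mult A.m_ac)
        also have "\<dots> = \<zero>\<^bsub>D\<^esub>" using u(2) a0 by (simp add: D_zero)
        finally show "\<exists>U\<in>carrier D - P. U \<otimes>\<^bsub>D\<^esub> (b, z) = \<zero>\<^bsub>D\<^esub>"
          using notP[OF k0, of u] u pmult[of u a0] a0 by auto
      qed
      have h2: "\<forall>b z b' z'. (b, z) \<in> carrier D \<longrightarrow> (b', z') \<in> carrier D \<longrightarrow>
        (\<exists>c\<in>carrier A. \<exists>u\<in>carrier A - p. u \<otimes>\<^bsub>A\<^esub> b' = b \<otimes>\<^bsub>A\<^esub> c) \<longrightarrow>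
        (\<exists>C\<in>carrier D. \<exists>U\<in>carrier D - P. U \<otimes>\<^bsub>D\<^esub> (b', z') = (b, z) \<otimes>\<^bsub>D\<^esub> C)"
      proof (intro allI impI)
        fix b z b' z' assume bz: "(b, z) \<in> carrier D" "(b', z') \<in> carrier D"
          "\<exists>c\<in>carrier A. \<exists>u\<in>carrier A - p. u \<otimes>\<^bsub>A\<^esub> b' = b \<otimes>\<^bsub>A\<^esub> c"
        then obtain c u where cu: "c \<in> carrier A" "u \<in> carrier A - p" "u \<otimes>\<^bsub>A\<^esub> b' = b \<otimes>\<^bsub>A\<^esub> c" by blast
        have bc: "b \<in> carrier A" "z \<in> carrier B" "b' \<in> carrier A" "z' \<in> carrier B"
          using bz by (auto simp: D_mem_iff)
        have "(u \<otimes>\<^bsub>A\<^esub> a0, \<zero>\<^bsub>B\<^esub>) \<otimes>\<^bsub>D\<^esub> (b', z') = (a0 \<otimes>\<^bsub>A\<^esub> (u \<otimes>\<^bsub>A\<^esub> b'), \<zero>\<^bsub>B\<^esub>)"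
          using cu(1,2) bc a0 by (simp add: D_mult A.m_ac)
        also have "\<dots> = (a0 \<otimes>\<^bsub>A\<^esub> (b \<otimes>\<^bsub>A\<^esub> c), \<zero>\<^bsub>B\<^esub>)" using cu(3) by simp
        also have "\<dots> = (b, z) \<otimes>\<^bsub>D\<^esub> (c \<otimes>\<^bsub>A\<^esub> a0, \<zero>\<^bsub>B\<^esub>)"
          using cu(1,2) bc a0 by (simp add: D_mult A.m_ac)
        finally show "\<exists>C\<in>carrier D. \<exists>U\<in>carrier D - P. U \<otimes>\<^bsub>D\<^esub> (b', z') = (b, z) \<otimes>\<^bsub>D\<^esub> C"
          using notP[OF k0, of u] cu pmult[of u a0] a0 k0[of c] by auto
      qed
      show ?thesis using h1 h2 by blast
    next
      case False
      then have Kp: "K \<subseteq> p" by blast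
      have onep: "\<one>\<^bsub>A\<^esub> \<notin> p" using pp.one_imp_carrier pp.I_notcarr by blast
      obtain M where M: "maximalideal M A" "p \<subseteq> M" using A.max_exists[OF pp.is_ideal onep] by blast
      have ann: "\<forall>j\<in>J. \<exists>t\<in>S_set A B f J M. t \<otimes>\<^bsub>B\<^esub> j = \<zero>\<^bsub>B\<^esub>" using hC[OF M(1)] Kp M(2) by blast
      have annD: "\<And>j. j \<in> J \<Longrightarrow> \<exists>s w. (s, w) \<in> carrier D \<and> s \<in> carrier A - p \<and> w \<otimes>\<^bsub>B\<^esub> j = \<zero>\<^bsub>B\<^esub>"
      proof -
        fix j assume "j \<in> J"
        then obtain t where t: "t \<in> S_set A B f J M" "t \<otimes>\<^bsub>B\<^esub> j = \<zero>\<^bsub>B\<^esub>" using ann by blast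
        then obtain s j' where s: "t = f s \<oplus>\<^bsub>B\<^esub> j'" "s \<in> carrier A - M" "j' \<in> J"
          unfolding S_set_def by blast
        have "(s, t) \<in> carrier D" using s D_memI by simp
        moreover have "s \<in> carrier A - p" using s M(2) by blast
        ultimately show "\<exists>s w. (s, w) \<in> carrier D \<and> s \<in> carrier A - p \<and> w \<otimes>\<^bsub>B\<^esub> j = \<zero>\<^bsub>B\<^esub>"
          using t by blast
      qed
      have h1: "\<forall>b z. (b, z) \<in> carrier D \<longrightarrow> (\<exists>u\<in>carrier A - p. u \<otimes>\<^bsub>A\<^esub> b = \<zero>\<^bsub>A\<^esub>) \<longrightarrow>
        (\<exists>U\<in>carrier D - P. U \<otimes>\<^bsub>D\<^esub> (b, z) = \<zero>\<^bsub>D\<^esub>)"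
      proof (intro allI impI)
        fix b z assume bz: "(b, z) \<in> carrier D" "\<exists>u\<in>carrier A - p. u \<otimes>\<^bsub>A\<^esub> b = \<zero>\<^bsub>A\<^esub>"
        then obtain u where u: "u \<in> carrier A - p" "u \<otimes>\<^bsub>A\<^esub> b = \<zero>\<^bsub>A\<^esub>" by blast
        have bc: "b \<in> carrier A" using bz by (auto simp: D_mem_iff)
        obtain j where j: "j \<in> J" "z = f b \<oplus>\<^bsub>B\<^esub> j" using D_decomp[OF bz(1)] by blast
        obtain s w where sw: "(s, w) \<in> carrier D" "s \<in> carrier A - p" "w \<otimes>\<^bsub>B\<^esub> j = \<zero>\<^bsub>B\<^esub>"
          using annD[OF j(1)] by blast
        have wc: "w \<in> carrier B" using sw by (simp add: D_mem_iff)
        have jc: "j \<in> carrier B" using j J_carr by blast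
        have fuc: "f u \<in> carrier B" "f b \<in> carrier B" using u bc f_carr by auto
        have U: "(u \<otimes>\<^bsub>A\<^esub> s, f u \<otimes>\<^bsub>B\<^esub> w) \<in> carrier D"
          using Dr.m_closed[OF D_fa[of u] sw(1)] u by (simp add: D_mult)
        have "(u \<otimes>\<^bsub>A\<^esub> s, f u \<otimes>\<^bsub>B\<^esub> w) \<otimes>\<^bsub>D\<^esub> (b, z)
            = (s \<otimes>\<^bsub>A\<^esub> (u \<otimes>\<^bsub>A\<^esub> b), w \<otimes>\<^bsub>B\<^esub> (f u \<otimes>\<^bsub>B\<^esub> f b) \<oplus>\<^bsub>B\<^esub> f u \<otimes>\<^bsub>B\<^esub> (w \<otimes>\<^bsub>B\<^esub> j))"
          using u(1) sw(1,2) bc wc jc fuc j(2) by (simp add: D_mult A.m_ac B.m_ac B.r_distr)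
        also have "\<dots> = \<zero>\<^bsub>D\<^esub>"
          using u sw bc wc fuc by (simp add: D_zero f_mult[symmetric] f_zero)
        finally show "\<exists>U\<in>carrier D - P. U \<otimes>\<^bsub>D\<^esub> (b, z) = \<zero>\<^bsub>D\<^esub>"
          using notP[OF U] pmult[OF u(1) sw(2)] by blast
      qed
      have h2: "\<forall>b z b' z'. (b, z) \<in> carrier D \<longrightarrow> (b', z') \<in> carrier D \<longrightarrow>
        (\<exists>c\<in>carrier A. \<exists>u\<in>carrier A - p. u \<otimes>\<^bsub>A\<^esub> b' = b \<otimes>\<^bsub>A\<^esub> c) \<longrightarrow>
        (\<exists>C\<in>carrier D. \<exists>U\<in>carrier D - P. U \<otimes>\<^bsub>D\<^esub> (b', z') = (b, z) \<otimes>\<^bsub>D\<^esub> C)"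
      proof (intro allI impI)
        fix b z b' z' assume bz: "(b, z) \<in> carrier D" "(b', z') \<in> carrier D"
          "\<exists>c\<in>carrier A. \<exists>u\<in>carrier A - p. u \<otimes>\<^bsub>A\<^esub> b' = b \<otimes>\<^bsub>A\<^esub> c"
        then obtain c u where cu: "c \<in> carrier A" "u \<in> carrier A - p" "u \<otimes>\<^bsub>A\<^esub> b' = b \<otimes>\<^bsub>A\<^esub> c" by blast
        have bc: "b \<in> carrier A" "b' \<in> carrier A" using bz by (auto simp: D_mem_iff)
        obtain j1 where j1: "j1 \<in> J" "z = f b \<oplus>\<^bsub>B\<^esub> j1" using D_decomp[OF bz(1)] by blast
        obtain j2 where j2: "j2 \<in> J" "z' = f b' \<oplus>\<^bsub>B\<^esub> j2" using D_decomp[OF bz(2)] by blast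
        obtain s1 w1 where sw1: "(s1, w1) \<in> carrier D" "s1 \<in> carrier A - p" "w1 \<otimes>\<^bsub>B\<^esub> j1 = \<zero>\<^bsub>B\<^esub>"
          using annD[OF j1(1)] by blast
        obtain s2 w2 where sw2: "(s2, w2) \<in> carrier D" "s2 \<in> carrier A - p" "w2 \<otimes>\<^bsub>B\<^esub> j2 = \<zero>\<^bsub>B\<^esub>"
          using annD[OF j2(1)] by blast
        have cc: "w1 \<in> carrier B" "w2 \<in> carrier B" "j1 \<in> carrier B" "j2 \<in> carrier B"
          "f u \<in> carrier B" "f b \<in> carrier B" "f b' \<in> carrier B" "f c \<in> carrier B"
          "s1 \<in> carrier A" "s2 \<in> carrier A" "u \<in> carrier A"
          using sw1 sw2 j1 j2 J_carr cu bc f_carr by (auto simp: D_mem_iff)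
        have W: "(s1 \<otimes>\<^bsub>A\<^esub> s2, w1 \<otimes>\<^bsub>B\<^esub> w2) \<in> carrier D"
          using Dr.m_closed[OF sw1(1) sw2(1)] by (simp add: D_mult)
        have U: "(u \<otimes>\<^bsub>A\<^esub> (s1 \<otimes>\<^bsub>A\<^esub> s2), f u \<otimes>\<^bsub>B\<^esub> (w1 \<otimes>\<^bsub>B\<^esub> w2)) \<in> carrier D"
          using Dr.m_closed[OF D_fa[of u] W] cc by (simp add: D_mult)
        have C: "(c \<otimes>\<^bsub>A\<^esub> (s1 \<otimes>\<^bsub>A\<^esub> s2), f c \<otimes>\<^bsub>B\<^esub> (w1 \<otimes>\<^bsub>B\<^esub> w2)) \<in> carrier D"
          using Dr.m_closed[OF D_fa[of c] W] cu by (simp add: D_mult)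
        have Unp: "u \<otimes>\<^bsub>A\<^esub> (s1 \<otimes>\<^bsub>A\<^esub> s2) \<in> carrier A - p"
          using pmult[OF cu(2) pmult[OF sw1(2) sw2(2)]] .
        have e1: "u \<otimes>\<^bsub>A\<^esub> (s1 \<otimes>\<^bsub>A\<^esub> s2) \<otimes>\<^bsub>A\<^esub> b' = b \<otimes>\<^bsub>A\<^esub> (c \<otimes>\<^bsub>A\<^esub> (s1 \<otimes>\<^bsub>A\<^esub> s2))"
        proof -
          have "u \<otimes>\<^bsub>A\<^esub> (s1 \<otimes>\<^bsub>A\<^esub> s2) \<otimes>\<^bsub>A\<^esub> b' = (u \<otimes>\<^bsub>A\<^esub> b') \<otimes>\<^bsub>A\<^esub> (s1 \<otimes>\<^bsub>A\<^esub> s2)"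
            using cc bc by (simp add: A.m_ac)
          also have "\<dots> = (b \<otimes>\<^bsub>A\<^esub> c) \<otimes>\<^bsub>A\<^esub> (s1 \<otimes>\<^bsub>A\<^esub> s2)" using cu(3) by simp
          also have "\<dots> = b \<otimes>\<^bsub>A\<^esub> (c \<otimes>\<^bsub>A\<^esub> (s1 \<otimes>\<^bsub>A\<^esub> s2))" using cc bc cu by (simp add: A.m_ac)
          finally show ?thesis .
        qed
        have e2: "f u \<otimes>\<^bsub>B\<^esub> (w1 \<otimes>\<^bsub>B\<^esub> w2) \<otimes>\<^bsub>B\<^esub> z' = z \<otimes>\<^bsub>B\<^esub> (f c \<otimes>\<^bsub>B\<^esub> (w1 \<otimes>\<^bsub>B\<^esub> w2))"
        proof -
          have "f u \<otimes>\<^bsub>B\<^esub> (w1 \<otimes>\<^bsub>B\<^esub> w2) \<otimes>\<^bsub>B\<^esub> z'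
              = (f u \<otimes>\<^bsub>B\<^esub> f b') \<otimes>\<^bsub>B\<^esub> (w1 \<otimes>\<^bsub>B\<^esub> w2) \<oplus>\<^bsub>B\<^esub> (f u \<otimes>\<^bsub>B\<^esub> w1) \<otimes>\<^bsub>B\<^esub> (w2 \<otimes>\<^bsub>B\<^esub> j2)"
            using cc j2(2) by (simp add: B.r_distr B.m_ac)
          also have "\<dots> = f (u \<otimes>\<^bsub>A\<^esub> b') \<otimes>\<^bsub>B\<^esub> (w1 \<otimes>\<^bsub>B\<^esub> w2)"
            using cc bc sw2(3) by (simp add: f_mult)
          also have "\<dots> = f (b \<otimes>\<^bsub>A\<^esub> c) \<otimes>\<^bsub>B\<^esub> (w1 \<otimes>\<^bsub>B\<^esub> w2)" using cu(3) by simp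
          also have "\<dots> = (f b \<otimes>\<^bsub>B\<^esub> f c) \<otimes>\<^bsub>B\<^esub> (w1 \<otimes>\<^bsub>B\<^esub> w2) \<oplus>\<^bsub>B\<^esub> (f c \<otimes>\<^bsub>B\<^esub> w2) \<otimes>\<^bsub>B\<^esub> (w1 \<otimes>\<^bsub>B\<^esub> j1)"
            using cc bc cu sw1(3) by (simp add: f_mult)
          also have "\<dots> = z \<otimes>\<^bsub>B\<^esub> (f c \<otimes>\<^bsub>B\<^esub> (w1 \<otimes>\<^bsub>B\<^esub> w2))"
            using cc j1(2) by (simp add: B.l_distr B.r_distr B.m_ac)
          finally show ?thesis .
        qed
        have "(u \<otimes>\<^bsub>A\<^esub> (s1 \<otimes>\<^bsub>A\<^esub> s2), f u \<otimes>\<^bsub>B\<^esub> (w1 \<otimes>\<^bsub>B\<^esub> w2)) \<otimes>\<^bsub>D\<^esub> (b', z')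
            = (b, z) \<otimes>\<^bsub>D\<^esub> (c \<otimes>\<^bsub>A\<^esub> (s1 \<otimes>\<^bsub>A\<^esub> s2), f c \<otimes>\<^bsub>B\<^esub> (w1 \<otimes>\<^bsub>B\<^esub> w2))"
          using e1 e2 by (simp add: D_mult)
        then show "\<exists>C\<in>carrier D. \<exists>U\<in>carrier D - P. U \<otimes>\<^bsub>D\<^esub> (b', z') = (b, z) \<otimes>\<^bsub>D\<^esub> C"
          using notP[OF U Unp] C by blast
      qed
      show ?thesis using h1 h2 by blast
    qed
  have H1: "\<And>b z. (b, z) \<in> carrier D \<Longrightarrow> \<exists>u\<in>carrier A - p. u \<otimes>\<^bsub>A\<^esub> b = \<zero>\<^bsub>A\<^esub> \<Longrightarrow>
        \<exists>U\<in>carrier D - P. U \<otimes>\<^bsub>D\<^esub> (b, z) = \<zero>\<^bsub>D\<^esub>" using H12 by blast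
  have H2: "\<And>b z b' z'. (b, z) \<in> carrier D \<Longrightarrow> (b', z') \<in> carrier D \<Longrightarrow>
        \<exists>c\<in>carrier A. \<exists>u\<in>carrier A - p. u \<otimes>\<^bsub>A\<^esub> b' = b \<otimes>\<^bsub>A\<^esub> c \<Longrightarrow>
        \<exists>C\<in>carrier D. \<exists>U\<in>carrier D - P. U \<otimes>\<^bsub>D\<^esub> (b', z') = (b, z) \<otimes>\<^bsub>D\<^esub> C" using H12 by blast
  show "VD D (carrier D - P)"
    unfolding VD_def
  proof (intro conjI ballI impI)
    show "\<zero>\<^bsub>D\<^esub> \<notin> carrier D - P" using zP by blast
  next
    fix Xa Ya Ta assume h: "Xa \<in> carrier D" "Ya \<in> carrier D" "Ta \<in> carrier D - P" "Ta \<otimes>\<^bsub>D\<^esub> (Xa \<otimes>\<^bsub>D\<^esub> Ya) = \<zero>\<^bsub>D\<^esub>"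
    obtain a y where X: "Xa = (a, y)" "a \<in> carrier A" using D_pair[OF h(1)] by blast
    obtain a' y' where Y: "Ya = (a', y')" "a' \<in> carrier A" using D_pair[OF h(2)] by blast
    obtain c w where T: "Ta = (c, w)" "c \<in> carrier A" using D_pair h(3) by blast
    have cp: "c \<in> carrier A - p" using keyp h(3) T by blast
    have "c \<otimes>\<^bsub>A\<^esub> (a \<otimes>\<^bsub>A\<^esub> a') = \<zero>\<^bsub>A\<^esub>" using h(4) X Y T by (simp add: D_mult D_zero)
    then have "(\<exists>u\<in>carrier A - p. u \<otimes>\<^bsub>A\<^esub> a = \<zero>\<^bsub>A\<^esub>) \<or> (\<exists>u\<in>carrier A - p. u \<otimes>\<^bsub>A\<^esub> a' = \<zero>\<^bsub>A\<^esub>)"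
      using VD_D1[OF vdA X(2) Y(2) cp] by blast
    then show "(\<exists>U\<in>carrier D - P. U \<otimes>\<^bsub>D\<^esub> Xa = \<zero>\<^bsub>D\<^esub>) \<or> (\<exists>U\<in>carrier D - P. U \<otimes>\<^bsub>D\<^esub> Ya = \<zero>\<^bsub>D\<^esub>)"
      using H1[of a y] H1[of a' y'] h(1,2) X(1) Y(1) by blast
  next
    fix Xa Ya assume h: "Xa \<in> carrier D" "Ya \<in> carrier D"
    obtain a y where X: "Xa = (a, y)" "a \<in> carrier A" using D_pair[OF h(1)] by blast
    obtain a' y' where Y: "Ya = (a', y')" "a' \<in> carrier A" using D_pair[OF h(2)] by blast
    show "(\<exists>C\<in>carrier D. \<exists>U\<in>carrier D - P. U \<otimes>\<^bsub>D\<^esub> Ya = Xa \<otimes>\<^bsub>D\<^esub> C) \<or>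
          (\<exists>C\<in>carrier D. \<exists>U\<in>carrier D - P. U \<otimes>\<^bsub>D\<^esub> Xa = Ya \<otimes>\<^bsub>D\<^esub> C)"
      using VD_D2[OF vdA X(2) Y(2)] H2[of a y a' y'] H2[of a' y' a y] h X(1) Y(1) by blast
  qed
qed

end

theorem proposition4p11:
  fixes A :: "('a, 'm) ring_scheme" and B :: "('b, 'n) ring_scheme"
    and f :: "'a \<Rightarrow> 'b" and J :: "'b set"
  assumes "cring A" and "cring B" and "f \<in> ring_hom A B" and "ideal J B"
    and hyp: "\<And>M. maximalideal M A \<Longrightarrow> {a \<in> carrier A. f a \<in> J} \<subseteq> M \<Longrightarrow>
        loc_induced f B (S_set A B f J M) ` carrier (loc A (carrier A - M))
          = carrier (loc B (S_set A B f J M))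
        \<or> loc_ext A (carrier A - M) {a \<in> carrier A. f a \<in> J}
          \<noteq> {\<zero>\<^bsub>loc A (carrier A - M)\<^esub>}"
  shows "wgldim_le1 (amalg A B f J) \<longleftrightarrow>
    (wgldim_le1 A
     \<and> (\<forall>N. maximalideal N B \<and> \<not> J \<subseteq> N \<longrightarrow> valuation_domain (loc B (carrier B - N)))
     \<and> (\<forall>M. maximalideal M A \<and> {a \<in> carrier A. f a \<in> J} \<subseteq> M \<longrightarrow>
          loc_ext B (S_set A B f J M) J = {\<zero>\<^bsub>loc B (S_set A B f J M)\<^esub>}))"
proof -
  interpret amal A B f J
    using assms(1-4) by (intro amal.intro amal_axioms.intro) auto
  have wD: "wgldim_le1 (amalg A B f J) \<longleftrightarrow> (\<forall>P. primeideal P (amalg A B f J) \<longrightarrow> VD (amalg A B f J) (carrier (amalg A B f J) - P))"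
    unfolding wgldim_le1_def using mset.valuation_domain_loc_iff[OF mset_prime] by blast
  have wB: "\<And>N. maximalideal N B \<Longrightarrow> valuation_domain (loc B (carrier B - N)) \<longleftrightarrow> VD B (carrier B - N)"
    using mset.valuation_domain_loc_iff[OF mset_prime[OF B.maximalideal_prime]] by blast
  have Jsub: "J \<subseteq> carrier B" using J_carr by blast
  have wC: "\<And>M. maximalideal M A \<Longrightarrow> loc_ext B (S_set A B f J M) J = {\<zero>\<^bsub>loc B (S_set A B f J M)\<^esub>}
      \<longleftrightarrow> (\<forall>j\<in>J. \<exists>t\<in>S_set A B f J M. t \<otimes>\<^bsub>B\<^esub> j = \<zero>\<^bsub>B\<^esub>)"
    using mset.loc_ext_zero_iff[OF S_set_mset[OF A.maximalideal_prime] Jsub] by blast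
  show ?thesis
  proof
    assume "wgldim_le1 (amalg A B f J)"
    then have all: "\<And>P. primeideal P (amalg A B f J) \<Longrightarrow> VD (amalg A B f J) (carrier (amalg A B f J) - P)"
      using wD by blast
    have a: "wgldim_le1 A" by (rule dir1_A[OF all])
    have b: "\<forall>N. maximalideal N B \<and> \<not> J \<subseteq> N \<longrightarrow> valuation_domain (loc B (carrier B - N))"
      using dir1_B[OF all] wB by blast
    have c: "\<forall>M. maximalideal M A \<and> {a \<in> carrier A. f a \<in> J} \<subseteq> M \<longrightarrow>
          loc_ext B (S_set A B f J M) J = {\<zero>\<^bsub>loc B (S_set A B f J M)\<^esub>}"
      using dir1_C[OF all _ hyp] wC by blast
    show "wgldim_le1 A
     \<and> (\<forall>N. maximalideal N B \<and> \<not> J \<subseteq> N \<longrightarrow> valuation_domain (loc B (carrier B - N)))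
     \<and> (\<forall>M. maximalideal M A \<and> {a \<in> carrier A. f a \<in> J} \<subseteq> M \<longrightarrow>
          loc_ext B (S_set A B f J M) J = {\<zero>\<^bsub>loc B (S_set A B f J M)\<^esub>})" using a b c by blast
  next
    assume h: "wgldim_le1 A
     \<and> (\<forall>N. maximalideal N B \<and> \<not> J \<subseteq> N \<longrightarrow> valuation_domain (loc B (carrier B - N)))
     \<and> (\<forall>M. maximalideal M A \<and> {a \<in> carrier A. f a \<in> J} \<subseteq> M \<longrightarrow>
          loc_ext B (S_set A B f J M) J = {\<zero>\<^bsub>loc B (S_set A B f J M)\<^esub>})"
    have wA: "wgldim_le1 A" using h by blast
    have hB: "\<And>N. maximalideal N B \<Longrightarrow> \<not> J \<subseteq> N \<Longrightarrow> VD B (carrier B - N)" using h wB by blast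
    have hC: "\<And>M. maximalideal M A \<Longrightarrow> {a \<in> carrier A. f a \<in> J} \<subseteq> M \<Longrightarrow>
        \<forall>j\<in>J. \<exists>t\<in>S_set A B f J M. t \<otimes>\<^bsub>B\<^esub> j = \<zero>\<^bsub>B\<^esub>"
    proof -
      fix M assume M: "maximalideal M A" and KM: "{a \<in> carrier A. f a \<in> J} \<subseteq> M"
      from h have c: "\<forall>M. maximalideal M A \<and> {a \<in> carrier A. f a \<in> J} \<subseteq> M \<longrightarrow>
          loc_ext B (S_set A B f J M) J = {\<zero>\<^bsub>loc B (S_set A B f J M)\<^esub>}" by (elim conjE)
      have "loc_ext B (S_set A B f J M) J = {\<zero>\<^bsub>loc B (S_set A B f J M)\<^esub>}"
        using c[rule_format, OF conjI[OF M KM]] .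
      then show "\<forall>j\<in>J. \<exists>t\<in>S_set A B f J M. t \<otimes>\<^bsub>B\<^esub> j = \<zero>\<^bsub>B\<^esub>"
        by (rule iffD1[OF wC[OF M]])
    qed
    have "\<forall>P. primeideal P (amalg A B f J) \<longrightarrow> VD (amalg A B f J) (carrier (amalg A B f J) - P)"
    proof (intro allI impI)
      fix P assume P: "primeideal P (amalg A B f J)"
      show "VD (amalg A B f J) (carrier (amalg A B f J) - P)"
      proof (cases "\<exists>j0\<in>J. (\<zero>\<^bsub>A\<^esub>, j0) \<notin> P")
        case True
        then obtain j0 where "j0 \<in> J" "(\<zero>\<^bsub>A\<^esub>, j0) \<notin> P" by blast
        then show ?thesis using dir2_A[OF hB hC P] by blast
      next
        case False
        then show ?thesis using dir2_B[OF wA hC P] by blast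
      qed
    qed
    then show "wgldim_le1 (amalg A B f J)" using wD by blast
  qed
qed

end
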